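(* Consider the relative dynamics and constraint described in the context, with initial location $\mathbf{x}_0=(x_0,y_0)$, $\|\mathbf{x}_0\|>1$, $y_0\ge0$, and let $$\theta_{\tan}=\cos^{-1}\Big(\tfrac{1}{\|\mathbf{x}_0\|}\Big)+\operatorname{atan}(y_0,x_0).$$ For a target location on the Proximity Circle at angle $\theta\ge\theta_{\tan}$, the optimal (minimum-time, constraint-respecting) Evader trajectory from $\mathbf{x}_0$ to $(\cos\theta,\sin\theta)$ is to follow a straight-line trajectory to the point $(\cos\theta_{\tan},\sin\theta_{\tan})$ (the tangent point of the Proximity Circle as seen from $\mathbf{x}_0$) and then proceed along the Proximity Circle from $\theta_{\tan}$ to $\theta$.
   Context: Pursuer-fixed frame: the Evader's relative position $\mathbf{x}(t)=(x(t),y(t))\in\mathbb{R}^2$ evolves as $\dot x=\mu\cos\psi(t)-1$, $\dot y=\mu\sin\psi(t)$, $\mathbf{x}(0)=\mathbf{x}_0$, where $\mu\in(0,1)$ and $\psi(t)$ is the Evader's heading. The Proximity Circle is $\|\mathbf{x}\|=1$ and trajectories must satisfy $\|\mathbf{x}(t)\|\ge1$. A location at angle $\theta$ on the Proximity Circle means the point $(\cos\theta,\sin\theta)$. $\operatorname{atan}(a,b)$ is the two-argument arctangent (polar angle of $(b,a)$). The paper assumes throughout that $y\ge 0$. *)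

theory Defs
  imports "HOL-Analysis.Analysis"
begin

text \<open>Two-argument arctangent: atan2 a b is the polar angle of the point (b,a),
  with values in (-pi, pi] (library Arg).\<close>
definition atan2 :: "real \<Rightarrow> real \<Rightarrow> real" where
  "atan2 a b = Arg (Complex b a)"

text \<open>Relative velocity in the Pursuer-fixed frame for Evader heading psi.\<close>
definition rel_vel :: "real \<Rightarrow> real \<Rightarrow> real \<times> real" where
  "rel_vel \<mu> \<psi> = (\<mu> * cos \<psi> - 1, \<mu> * sin \<psi>)"

definition admissible ::
  "real \<Rightarrow> real \<times> real \<Rightarrow> (real \<Rightarrow> real) \<Rightarrow> real \<Rightarrow> (real \<Rightarrow> real \<times> real) \<Rightarrow> bool" where
  "admissible \<mu> p0 \<psi> T x \<longleftrightarrow>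
     0 \<le> T \<and> \<psi> \<in> borel_measurable lborel \<and>
     (\<forall>t\<in>{0..T}. x t = p0 + integral {0..t} (\<lambda>s. rel_vel \<mu> (\<psi> s)) \<and> 1 \<le> norm (x t))"

end

theory Submission
  imports Defs
begin

lemma cs_bound:
  fixes c s e1 e2 K R :: real
  assumes "e1\<^sup>2 + e2\<^sup>2 \<le> R\<^sup>2" "c\<^sup>2 + s\<^sup>2 = K\<^sup>2" "0 \<le> R" "0 \<le> K"
  shows "\<bar>c*e1 + s*e2\<bar> \<le> K*R"
proof -
  have eq: "(c\<^sup>2 + s\<^sup>2)*(e1\<^sup>2 + e2\<^sup>2) - (c*e1 + s*e2)\<^sup>2 = (c*e2 - s*e1)\<^sup>2"
    by (simp add: power2_eq_square algebra_simps)
  have "(c*e1 + s*e2)\<^sup>2 \<le> (c\<^sup>2 + s\<^sup>2)*(e1\<^sup>2 + e2\<^sup>2)"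
    using eq zero_le_power2[of "c*e2 - s*e1"] by linarith
  also have "\<dots> \<le> K\<^sup>2 * R\<^sup>2" using assms(1,2) by (simp add: mult_left_mono)
  also have "\<dots> = (K*R)\<^sup>2" by (simp add: power_mult_distrib)
  finally have "(c*e1 + s*e2)\<^sup>2 \<le> (K*R)\<^sup>2" .
  hence "\<bar>c*e1 + s*e2\<bar> \<le> \<bar>K*R\<bar>" using abs_le_square_iff by blast
  thus ?thesis using assms(3,4) by simp
qed

lemma sqrt_le_sq:
  fixes X Y :: real
  assumes "sqrt X \<le> Y" "0 \<le> X" shows "X \<le> Y\<^sup>2"
proof -
  have "(sqrt X)\<^sup>2 \<le> Y\<^sup>2" by (rule power_mono[OF assms(1)]) (simp add: assms(2))
  thus ?thesis using assms(2) by simp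
qed

lemma growth_lemma:
  fixes g :: "real \<Rightarrow> real" and a b :: real
  assumes ab: "a \<le> b" and cont: "continuous_on {a..b} g"
    and loc: "\<And>t e. t \<in> {a..<b} \<Longrightarrow> e > 0 \<Longrightarrow>
               \<exists>d>0. \<forall>s. t < s \<and> s < t + d \<and> s \<le> b \<longrightarrow> g s - g t \<le> (1 + e) * (s - t)"
  shows "g b - g a \<le> b - a"
proof -
  have key: "g b - g a \<le> (1 + e) * (b - a)" if e: "e > 0" for e
  proof -
    define S where "S = {s\<in>{a..b}. g s - g a \<le> (1 + e) * (s - a)}"
    have aS: "a \<in> S" using ab e unfolding S_def by auto
    have bdd: "bdd_above S" unfolding S_def by (auto intro: bdd_aboveI[of _ b])
    have clo: "closed S" unfolding S_def
      by (rule continuous_on_closed_Collect_le) (auto intro!: continuous_intros cont)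
    define c where "c = Sup S"
    have cS: "c \<in> S" unfolding c_def using closed_contains_Sup[OF _ bdd clo] aS by blast
    have cb: "c = b"
    proof (rule ccontr)
      assume "c \<noteq> b"
      with cS have cb': "c \<in> {a..<b}" unfolding S_def by auto
      from loc[OF cb' e] obtain d where d: "d > 0"
        "\<And>s. c < s \<and> s < c + d \<and> s \<le> b \<Longrightarrow> g s - g c \<le> (1 + e) * (s - c)" by blast
      define s where "s = min (c + d/2) b"
      have cs: "c < s" "s < c + d" "s \<le> b" using cb' d(1) unfolding s_def by auto
      have "g s - g a = (g s - g c) + (g c - g a)" by simp
      also have "\<dots> \<le> (1 + e) * (s - c) + (1 + e) * (c - a)"
        using d(2)[OF conjI[OF cs(1) conjI[OF cs(2) cs(3)]]] cS unfolding S_def by auto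
      also have "\<dots> = (1 + e) * (s - a)" by (simp add: algebra_simps)
      finally have "s \<in> S" unfolding S_def using cs cb' by auto
      hence "s \<le> c" unfolding c_def using bdd by (simp add: cSup_upper)
      thus False using cs by simp
    qed
    show ?thesis using cS cb unfolding S_def by auto
  qed
  show ?thesis
  proof (rule field_le_epsilon)
    fix e :: real assume e: "0 < e"
    define e' where "e' = e / (b - a + 1)"
    have e': "e' > 0" using e ab unfolding e'_def by simp
    have "g b - g a \<le> (1 + e') * (b - a)" using key[OF e'] .
    also have "\<dots> = (b - a) + e' * (b - a)" by (simp add: algebra_simps)
    also have "e' * (b - a) \<le> e"
    proof -
      have "e' * (b - a) \<le> e' * (b - a + 1)" using e' by simp
      also have "\<dots> = e" unfolding e'_def using ab by simp
      finally show ?thesis .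
    qed
    finally show "g b - g a \<le> b - a + e" by simp
  qed
qed

locale traj =
  fixes \<mu> x0 y0 \<theta>t \<theta> \<rho> :: real and \<psi> :: "real \<Rightarrow> real" and T :: real
    and x :: "real \<Rightarrow> real \<times> real"
  assumes mu: "0 < \<mu>" "\<mu> < 1"
    and x0: "x0 = cos \<theta>t + \<rho> * sin \<theta>t" and y0: "y0 = sin \<theta>t - \<rho> * cos \<theta>t"
    and rho: "\<rho> > 0"
    and th: "0 < \<theta>t" "\<theta>t \<le> \<theta>" "\<theta> \<le> pi"
    and adm: "admissible \<mu> (x0, y0) \<psi> T x" and fin: "x T = (cos \<theta>, sin \<theta>)"
begin

lemma T_nonneg: "0 \<le> T" using adm unfolding admissible_def by auto

lemma xeq: "t \<in> {0..T} \<Longrightarrow> x t = (x0, y0) + integral {0..t} (\<lambda>s. rel_vel \<mu> (\<psi> s))"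
  using adm unfolding admissible_def by auto

lemma norm_ge: "t \<in> {0..T} \<Longrightarrow> 1 \<le> (fst (x t))\<^sup>2 + (snd (x t))\<^sup>2"
proof -
  assume t: "t \<in> {0..T}"
  hence "1 \<le> norm (x t)" using adm unfolding admissible_def by blast
  hence "1 \<le> sqrt ((fst (x t))\<^sup>2 + (snd (x t))\<^sup>2)"
    by (simp add: norm_prod_def)
  thus ?thesis by simp
qed

lemma integrable_v: "(\<lambda>s. rel_vel \<mu> (\<psi> s)) integrable_on {a..b}"
proof -
  have m: "\<psi> \<in> borel_measurable lborel" using adm unfolding admissible_def by auto
  have "(\<lambda>s. rel_vel \<mu> (\<psi> s)) \<in> borel_measurable lborel"
    unfolding rel_vel_def using m by measurable
  hence "(\<lambda>s. rel_vel \<mu> (\<psi> s)) \<in> borel_measurable (lebesgue_on {a..b})"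
    by (intro measurable_restrict_space1 measurable_completion)
  moreover have "(\<lambda>s. 1 + 2*\<mu>) integrable_on {a..b}" by (metis integrable_const interval_cbox)
  moreover have "norm (rel_vel \<mu> (\<psi> s)) \<le> 1 + 2*\<mu>" for s
  proof -
    have "norm (rel_vel \<mu> (\<psi> s)) \<le> norm (\<mu> * cos (\<psi> s) - 1) + norm (\<mu> * sin (\<psi> s))"
      unfolding rel_vel_def by (rule norm_Pair_le)
    also have "norm (\<mu> * cos (\<psi> s) - 1) \<le> \<bar>\<mu> * cos (\<psi> s)\<bar> + 1" by simp
    also have "\<bar>\<mu> * cos (\<psi> s)\<bar> \<le> \<mu>" using mu by (simp add: abs_mult)
    also have "norm (\<mu> * sin (\<psi> s)) \<le> \<mu>" using mu by (simp add: abs_mult)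
    finally show ?thesis by simp
  qed
  ultimately have "(\<lambda>s. rel_vel \<mu> (\<psi> s)) absolutely_integrable_on {a..b}"
    by (intro measurable_bounded_by_integrable_imp_absolutely_integrable) auto
  thus ?thesis by (simp add: absolutely_integrable_on_def)
qed

lemma chord:
  assumes ab: "0 \<le> a" "a \<le> b" "b \<le> T"
  shows "(fst (x b) - fst (x a) + (b - a))\<^sup>2 + (snd (x b) - snd (x a))\<^sup>2 \<le> (\<mu> * (b - a))\<^sup>2"
proof -
  let ?v = "\<lambda>s. rel_vel \<mu> (\<psi> s)"
  have "x b - x a = integral {0..b} ?v - integral {0..a} ?v"
    using xeq[of a] xeq[of b] ab by simp
  also have "integral {0..b} ?v = integral {0..a} ?v + integral {a..b} ?v"
    using Henstock_Kurzweil_Integration.integral_combine[of 0 a b ?v] ab integrable_v by simp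
  finally have xd: "x b - x a = integral {a..b} ?v" by simp
  have ic: "(\<lambda>s. (1::real, 0::real)) integrable_on {a..b}" by (metis integrable_const interval_cbox)
  have i1: "integral {a..b} (\<lambda>s. ?v s + (1,0)) = integral {a..b} ?v + (b - a) *\<^sub>R (1,0)"
    using integral_add[OF integrable_v ic] ab by simp
  have bnd: "norm (?v s + (1,0)) \<le> \<mu>" for s
  proof -
    have "?v s + (1,0) = (\<mu> * cos (\<psi> s), \<mu> * sin (\<psi> s))" unfolding rel_vel_def by simp
    also have "norm \<dots> = \<mu>"
    proof -
      have "(\<mu> * cos (\<psi> s))\<^sup>2 + (\<mu> * sin (\<psi> s))\<^sup>2 = \<mu>\<^sup>2 * ((cos (\<psi> s))\<^sup>2 + (sin (\<psi> s))\<^sup>2)"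
        by (simp only: power_mult_distrib distrib_left)
      also have "\<dots> = \<mu>\<^sup>2" by (simp only: sin_cos_squared_add2 mult_1_right)
      finally show ?thesis using mu by (simp add: norm_prod_def)
    qed
    finally show ?thesis by simp
  qed
  have hi: "((\<lambda>s. ?v s + (1,0)) has_integral integral {a..b} (\<lambda>s. ?v s + (1,0))) (cbox a b)"
    using integrable_integral[OF integrable_add[OF integrable_v ic]] by simp
  have "norm (integral {a..b} (\<lambda>s. ?v s + (1,0))) \<le> \<mu> * (b - a)"
    using has_integral_bound[OF less_imp_le[OF mu(1)] hi bnd] ab by simp
  hence "norm (x b - x a + (b - a, 0)) \<le> \<mu> * (b - a)" using i1 xd ab by simp
  hence "sqrt ((fst (x b) - fst (x a) + (b - a))\<^sup>2 + (snd (x b) - snd (x a))\<^sup>2) \<le> \<mu> * (b - a)"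
    by (simp add: norm_prod_def)
  thus ?thesis by (rule sqrt_le_sq) simp
qed

end

context traj begin

lemma lin_aux:
  fixes P Q R U V W :: real
  assumes "V \<le> P" "U = 1" "1 \<le> R" "R = U - 2*P + Q" "Q \<le> W" shows "2*V \<le> W"
  using assms by linarith

lemma x_at0: "x 0 = (x0, y0)"
  using xeq[of 0] T_nonneg by simp

lemma chord_sq:
  assumes ab: "0 \<le> a" "a \<le> b" "b \<le> T"
  shows "(fst (x b) - fst (x a))\<^sup>2 + (snd (x b) - snd (x a))\<^sup>2 \<le> 4 * (b - a)\<^sup>2"
proof -
  define d1 where "d1 = fst (x b) - fst (x a)"
  define d2 where "d2 = snd (x b) - snd (x a)"
  define L where "L = b - a"
  have c: "(d1 + L)\<^sup>2 + d2\<^sup>2 \<le> (\<mu> * L)\<^sup>2" using chord[OF ab] unfolding d1_def d2_def L_def .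
  have L0: "0 \<le> L" using ab unfolding L_def by simp
  have e: "2*(d1+L)\<^sup>2 + 2*L\<^sup>2 - d1\<^sup>2 = (d1 + 2*L)\<^sup>2" by (simp add: power2_eq_square algebra_simps)
  have "(\<mu> * L)\<^sup>2 \<le> L\<^sup>2" using mu L0 by (intro power_mono) (auto simp: mult_left_le_one_le)
  moreover have "0 \<le> (d1 + 2*L)\<^sup>2" "0 \<le> d2\<^sup>2" by simp_all
  ultimately have "d1\<^sup>2 + d2\<^sup>2 \<le> 4 * L\<^sup>2" using c e by linarith
  thus ?thesis unfolding d1_def d2_def L_def .
qed

lemma normdiff:
  assumes ab: "0 \<le> a" "a \<le> b" "b \<le> T"
  shows "norm (x b - x a) \<le> 2 * (b - a)"
proof -
  have "norm (x b - x a) = sqrt ((fst (x b) - fst (x a))\<^sup>2 + (snd (x b) - snd (x a))\<^sup>2)"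
    by (simp add: norm_prod_def)
  also have "\<dots> \<le> sqrt ((2 * (b - a))\<^sup>2)"
  proof (rule real_sqrt_le_mono)
    have "(2 * (b - a))\<^sup>2 = 4 * (b - a)\<^sup>2" by (simp add: power2_eq_square algebra_simps)
    thus "(fst (x b) - fst (x a))\<^sup>2 + (snd (x b) - snd (x a))\<^sup>2 \<le> (2 * (b - a))\<^sup>2"
      using chord_sq[OF ab] by simp
  qed
  also have "\<dots> = 2 * (b - a)" using ab by simp
  finally show ?thesis .
qed

lemma x_cont: "continuous_on {0..T} x"
proof -
  have "2-lipschitz_on {0..T} x"
  proof (rule lipschitz_onI)
    fix s t assume s: "s \<in> {0..T}" and t: "t \<in> {0..T}"
    show "dist (x s) (x t) \<le> 2 * dist s t"
    proof (cases "s \<le> t")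
      case True
      thus ?thesis using normdiff[of s t] s t by (simp add: dist_norm norm_minus_commute)
    next
      case False
      thus ?thesis using normdiff[of t s] s t by (simp add: dist_norm)
    qed
  qed simp
  thus ?thesis by (rule lipschitz_on_continuous_on)
qed

lemma fst_cont: "continuous_on {0..T} (\<lambda>t. fst (x t))"
  using x_cont by (intro continuous_intros)

lemma snd_cont: "continuous_on {0..T} (\<lambda>t. snd (x t))"
  using x_cont by (intro continuous_intros)

lemma p0_sq: "x0\<^sup>2 + y0\<^sup>2 = 1 + \<rho>\<^sup>2"
proof -
  have "x0\<^sup>2 + y0\<^sup>2 = ((cos \<theta>t)\<^sup>2 + (sin \<theta>t)\<^sup>2) * (1 + \<rho>\<^sup>2)"
    unfolding x0 y0 by algebra
  thus ?thesis by simp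
qed

lemma T_pos: "T > 0"
proof (rule ccontr)
  assume "\<not> T > 0"
  hence "T = 0" using T_nonneg by simp
  hence "(x0, y0) = (cos \<theta>, sin \<theta>)" using fin x_at0 by simp
  hence "x0\<^sup>2 + y0\<^sup>2 = 1" by auto
  thus False using p0_sq rho by simp
qed

lemma cos_th: "cos \<theta> \<ge> -\<mu>"
proof (rule ccontr)
  assume "\<not> cos \<theta> \<ge> -\<mu>"
  define \<delta> where "\<delta> = -(cos \<theta> + \<mu>)"
  have \<delta>: "\<delta> > 0" using \<open>\<not> cos \<theta> \<ge> -\<mu>\<close> unfolding \<delta>_def by simp
  define L where "L = min T (\<delta>/4)"
  have L: "0 < L" "L \<le> T" "L \<le> \<delta>/4" using T_pos \<delta> unfolding L_def by auto
  define t where "t = T - L"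
  have t: "0 \<le> t" "t \<le> T" "T - t = L" using L unfolding t_def by auto
  define d1 where "d1 = cos \<theta> - fst (x t)"
  define d2 where "d2 = sin \<theta> - snd (x t)"
  have c1: "(d1 + L)\<^sup>2 + d2\<^sup>2 \<le> (\<mu> * L)\<^sup>2"
    using chord[OF t(1,2) order_refl] fin t(3) unfolding d1_def d2_def by simp
  have c2: "d1\<^sup>2 + d2\<^sup>2 \<le> 4 * L\<^sup>2"
    using chord_sq[OF t(1,2) order_refl] fin t(3) unfolding d1_def d2_def by simp
  have ng: "1 \<le> (cos \<theta> - d1)\<^sup>2 + (sin \<theta> - d2)\<^sup>2"
    using norm_ge[of t] t unfolding d1_def d2_def by simp
  have cs: "\<bar>cos \<theta> * (d1 + L) + sin \<theta> * d2\<bar> \<le> 1 * (\<mu> * L)"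
    using cs_bound[OF c1, of "cos \<theta>" "sin \<theta>" 1] mu L by simp
  have ex: "(cos \<theta> - d1)\<^sup>2 + (sin \<theta> - d2)\<^sup>2
      = ((cos \<theta>)\<^sup>2 + (sin \<theta>)\<^sup>2) - 2 * (cos \<theta> * d1 + sin \<theta> * d2) + (d1\<^sup>2 + d2\<^sup>2)"
    by (simp add: power2_eq_square algebra_simps)
  have "cos \<theta> * d1 + sin \<theta> * d2 = (cos \<theta> * (d1 + L) + sin \<theta> * d2) - cos \<theta> * L"
    by (simp add: algebra_simps)
  hence "cos \<theta> * d1 + sin \<theta> * d2 \<ge> \<delta> * L" using cs unfolding \<delta>_def
    by (simp add: algebra_simps)
  moreover have "(cos \<theta>)\<^sup>2 + (sin \<theta>)\<^sup>2 = 1" by simp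
  ultimately have "2 * (\<delta> * L) \<le> 4 * L\<^sup>2" using ng ex c2 by (rule lin_aux)
  hence "(2 * \<delta>) * L \<le> (4 * L) * L" by (simp add: power2_eq_square algebra_simps)
  hence "2 * \<delta> \<le> 4 * L" using L(1) by (rule mult_right_le_imp_le)
  thus False using L(3) \<delta> by simp
qed

lemma th_lt_pi: "\<theta> < pi"
proof (rule ccontr)
  assume "\<not> \<theta> < pi" hence "\<theta> = pi" using th by simp
  thus False using cos_th mu by simp
qed

lemma sin_th_pos: "sin \<theta> > 0" using th th_lt_pi by (intro sin_gt_zero) auto
lemma sin_tht_pos: "sin \<theta>t > 0" using th th_lt_pi by (intro sin_gt_zero) auto
lemma cos_le: "cos \<theta> \<le> cos \<theta>t" using th by (intro cos_monotone_0_pi_le) auto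
lemma cos_tht_lt1: "cos \<theta>t < 1"
proof -
  have "cos \<theta>t < cos 0" using th th_lt_pi by (intro cos_monotone_0_pi) auto
  thus ?thesis by simp
qed
lemma cos_th_gt: "cos \<theta> > -1" using cos_th mu by simp

lemma fst_dec:
  assumes ab: "0 \<le> a" "a \<le> b" "b \<le> T"
  shows "fst (x b) - fst (x a) \<le> -(1 - \<mu>) * (b - a)"
proof -
  define d1 where "d1 = fst (x b) - fst (x a)"
  have "(d1 + (b - a))\<^sup>2 \<le> (\<mu> * (b - a))\<^sup>2"
    using chord[OF ab] zero_le_power2[of "snd (x b) - snd (x a)"] unfolding d1_def by linarith
  hence "\<bar>d1 + (b - a)\<bar> \<le> \<bar>\<mu> * (b - a)\<bar>" using abs_le_square_iff by blast
  hence "d1 + (b - a) \<le> \<mu> * (b - a)" using mu ab by (simp add: abs_mult)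
  thus ?thesis unfolding d1_def by (simp add: algebra_simps)
qed

lemma tP_ex: "\<exists>tP. 0 < tP \<and> tP \<le> T \<and> fst (x tP) = cos \<theta>t"
proof -
  have a: "fst (x T) \<le> cos \<theta>t" using fin cos_le by simp
  have b: "cos \<theta>t \<le> fst (x 0)" using x_at0 x0 rho sin_tht_pos by simp
  obtain tP where tP: "0 \<le> tP" "tP \<le> T" "fst (x tP) = cos \<theta>t"
    using IVT2'[of "\<lambda>t. fst (x t)" T "cos \<theta>t" 0, OF a b T_nonneg fst_cont] by blast
  have "\<rho> * sin \<theta>t > 0" using rho sin_tht_pos by simp
  hence "tP \<noteq> 0" using tP(3) x_at0 x0 by auto
  thus ?thesis using tP by (intro exI[of _ tP]) auto
qed

lemma above:
  assumes tP: "0 \<le> tP" "fst (x tP) = cos \<theta>t" and t: "tP \<le> t" "t \<le> T"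
  shows "cos \<theta> \<le> fst (x t) \<and> fst (x t) \<le> cos \<theta>t \<and> snd (x t) > 0
         \<and> sqrt (1 - (fst (x t))\<^sup>2) \<le> snd (x t)"
proof -
  have dec: "fst (x b) \<le> fst (x a)" if "0 \<le> a" "a \<le> b" "b \<le> T" for a b
  proof -
    have "0 \<le> (1 - \<mu>) * (b - a)" using mu that by simp
    moreover have "-(1 - \<mu>) * (b - a) = - ((1 - \<mu>) * (b - a))" by (simp add: algebra_simps)
    ultimately show ?thesis using fst_dec[OF that] by linarith
  qed
  have r1: "fst (x t) \<le> cos \<theta>t" using dec[of tP t] tP t by simp
  have r2: "cos \<theta> \<le> fst (x t)" using dec[of t T] tP t fin by simp
  have inside: "(fst (x s))\<^sup>2 < 1" if "t \<le> s" "s \<le> T" for s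
  proof -
    have "fst (x s) \<le> cos \<theta>t" using dec[of tP s] tP t that by simp
    moreover have "cos \<theta> \<le> fst (x s)" using dec[of s T] tP t that fin by simp
    ultimately have "\<bar>fst (x s)\<bar> < 1" using cos_tht_lt1 cos_th_gt by auto
    thus ?thesis by (simp add: abs_square_less_1)
  qed
  have pos: "snd (x t) > 0"
  proof (rule ccontr)
    assume "\<not> snd (x t) > 0"
    hence "snd (x t) \<le> 0" by simp
    moreover have "0 \<le> snd (x T)" using fin sin_th_pos by simp
    moreover have "continuous_on {t..T} (\<lambda>t. snd (x t))"
      using snd_cont by (rule continuous_on_subset) (use tP t in auto)
    ultimately obtain s where s: "t \<le> s" "s \<le> T" "snd (x s) = 0"
      using IVT'[of "\<lambda>t. snd (x t)" t 0 T] t by blast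
    have "1 \<le> (fst (x s))\<^sup>2 + (snd (x s))\<^sup>2" using norm_ge[of s] s tP t by simp
    thus False using inside[OF s(1,2)] s(3) by simp
  qed
  have "1 \<le> (fst (x t))\<^sup>2 + (snd (x t))\<^sup>2" using norm_ge[of t] tP t by simp
  hence "1 - (fst (x t))\<^sup>2 \<le> (snd (x t))\<^sup>2" by simp
  hence "sqrt (1 - (fst (x t))\<^sup>2) \<le> sqrt ((snd (x t))\<^sup>2)" by (rule real_sqrt_le_mono)
  hence "sqrt (1 - (fst (x t))\<^sup>2) \<le> snd (x t)" using pos by simp
  thus ?thesis using r1 r2 pos by simp
qed

lemma cos_tht_le: "cos \<theta>t \<le> \<mu>"
proof (rule ccontr)
  assume nc: "\<not> cos \<theta>t \<le> \<mu>"
  obtain tP where tP: "0 < tP" "tP \<le> T" "fst (x tP) = cos \<theta>t" using tP_ex by blast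
  have ab: "sqrt (1 - (cos \<theta>t)\<^sup>2) \<le> snd (x tP)" using above[of tP tP] tP by simp
  have "sqrt (1 - (cos \<theta>t)\<^sup>2) = sin \<theta>t" using sin_tht_pos
    by (simp add: sin_squared_eq[symmetric])
  hence Y: "sin \<theta>t \<le> snd (x tP)" using ab by simp
  define d1 where "d1 = fst (x tP) - fst (x 0)"
  define d2 where "d2 = snd (x tP) - snd (x 0)"
  have c1: "(d1 + tP)\<^sup>2 + d2\<^sup>2 \<le> (\<mu> * tP)\<^sup>2"
    using chord[of 0 tP] tP unfolding d1_def d2_def by simp
  have cs: "\<bar>cos \<theta>t * (d1 + tP) + sin \<theta>t * d2\<bar> \<le> 1 * (\<mu> * tP)"
    using cs_bound[OF c1, of "cos \<theta>t" "sin \<theta>t" 1] mu tP by simp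
  have d1: "d1 = - \<rho> * sin \<theta>t" unfolding d1_def using tP x_at0 x0 by simp
  have d2: "d2 = snd (x tP) - sin \<theta>t + \<rho> * cos \<theta>t" unfolding d2_def using x_at0 y0 by simp
  have "cos \<theta>t * d1 + sin \<theta>t * d2 = sin \<theta>t * (snd (x tP) - sin \<theta>t)"
    unfolding d1 d2 by (simp add: algebra_simps)
  also have "\<dots> \<ge> 0" using Y sin_tht_pos by simp
  finally have "0 \<le> cos \<theta>t * d1 + sin \<theta>t * d2" .
  hence "cos \<theta>t * tP \<le> \<mu> * tP" using cs by (simp add: algebra_simps)
  hence "cos \<theta>t \<le> \<mu>" using tP(1) by simp
  thus False using nc by simp
qed
end

definition Sg :: "real \<Rightarrow> real \<Rightarrow> real" where
  "Sg m \<phi> = sin \<phi> + sqrt (m\<^sup>2 - (cos \<phi>)\<^sup>2)"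

definition ff :: "real \<Rightarrow> real \<Rightarrow> real \<Rightarrow> real" where
  "ff c m s = 1 / max (Sg m s) c"

definition tau :: "real \<Rightarrow> real \<Rightarrow> real \<Rightarrow> real \<Rightarrow> real" where
  "tau c m a \<phi> = integral {a - 1..\<phi>} (ff c m) - integral {a - 1..a} (ff c m)"

lemma ff_cont:
  assumes "c > 0" shows "continuous_on UNIV (ff c m)"
proof -
  have "continuous_on UNIV (\<lambda>s. max (Sg m s) c)" unfolding Sg_def by (intro continuous_intros)
  moreover have "\<forall>s\<in>UNIV. max (Sg m s) c \<noteq> 0" using assms by auto
  ultimately have "continuous_on UNIV (\<lambda>s. 1 / max (Sg m s) c)"
    by (intro continuous_on_divide continuous_on_const)
  moreover have "ff c m = (\<lambda>s. 1 / max (Sg m s) c)" by (rule ext) (simp add: ff_def)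
  ultimately show ?thesis by simp
qed

lemma ff_pos: "c > 0 \<Longrightarrow> ff c m s > 0"
  by (simp add: ff_def)

lemma ff_integrable: "c > 0 \<Longrightarrow> ff c m integrable_on {a..b}"
  by (rule integrable_continuous_interval) (rule continuous_on_subset[OF ff_cont], auto)

lemma tau_deriv:
  assumes c: "c > 0" and p: "a - 1 < \<phi>"
  shows "(tau c m a has_real_derivative ff c m \<phi>) (at \<phi>)"
proof -
  have "((\<lambda>u. integral {a - 1..u} (ff c m)) has_real_derivative ff c m \<phi>) (at \<phi> within {a-1..\<phi>+1})"
    by (rule integral_has_real_derivative) (use p continuous_on_subset[OF ff_cont[OF c]] in auto)
  moreover have "at \<phi> within {a-1..\<phi>+1} = at \<phi>"
    by (rule at_within_interior) (use p in auto)
  ultimately have d: "((\<lambda>u. integral {a - 1..u} (ff c m)) has_real_derivative ff c m \<phi>) (at \<phi>)"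
    by simp
  have "((\<lambda>u. integral {a - 1..u} (ff c m) - integral {a - 1..a} (ff c m)) has_real_derivative
          ff c m \<phi> - 0) (at \<phi>)"
    by (rule DERIV_diff[OF d DERIV_const])
  moreover have "tau c m a = (\<lambda>u. integral {a - 1..u} (ff c m) - integral {a - 1..a} (ff c m))"
    by (rule ext) (simp add: tau_def)
  ultimately show ?thesis by simp
qed

lemma tau_eq:
  assumes "c > 0" "a \<le> b" shows "tau c m a b = integral {a..b} (ff c m)"
proof -
  have "integral {a-1..a} (ff c m) + integral {a..b} (ff c m) = integral {a-1..b} (ff c m)"
    by (rule Henstock_Kurzweil_Integration.integral_combine) (use assms ff_integrable in auto)
  thus ?thesis by (simp add: tau_def)
qed

lemma tau_a: "tau c m a a = 0" by (simp add: tau_def)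

lemma alg_main:
  fixes x h S m :: real
  assumes h: "h > 0" "h\<^sup>2 = 1 - x\<^sup>2" and S: "S > 0" "S\<^sup>2 = m\<^sup>2 - x\<^sup>2" and mpos: "m > 0"
  shows "((x\<^sup>2 - S*h)/((h+S)*S))\<^sup>2 + (x/S)\<^sup>2 = (m/((h+S)*S))\<^sup>2"
    "-((x\<^sup>2 - S*h)/((h+S)*S)) + m*(m/((h+S)*S)) = 1"
    "((x\<^sup>2 - S*h)/((h+S)*S))*h - (x/S)*x = -1/(h+S)"
    "-(1/((h+S)*h)) + x\<^sup>2/(h*S) = (x\<^sup>2 - S*h)/((h+S)*S)"
    "(1*S - x*(-x/S))/(S*S) = m\<^sup>2/S^3"
proof -
  have nz: "h \<noteq> 0" "S \<noteq> 0" "h + S \<noteq> 0" "(h+S)*S \<noteq> 0" using h S by auto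
  have k: "x/S = (x*(h+S))/((h+S)*S)" using nz by simp
  have e1: "(x\<^sup>2 - S*h)\<^sup>2 + (x*(h+S))\<^sup>2 = (x\<^sup>2 + S\<^sup>2)*(x\<^sup>2 + h\<^sup>2)"
    by (simp add: power2_eq_square algebra_simps)
  also have "\<dots> = m\<^sup>2" using h S by simp
  finally have e2: "(x\<^sup>2 - S*h)\<^sup>2 + (x*(h+S))\<^sup>2 = m\<^sup>2" .
  show "((x\<^sup>2 - S*h)/((h+S)*S))\<^sup>2 + (x/S)\<^sup>2 = (m/((h+S)*S))\<^sup>2"
    unfolding k power_divide add_divide_distrib[symmetric] e2 ..
  have "-((x\<^sup>2 - S*h)/((h+S)*S)) + m*(m/((h+S)*S)) = (m\<^sup>2 - (x\<^sup>2 - S*h))/((h+S)*S)"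
    by (simp add: diff_divide_distrib power2_eq_square)
  also have "m\<^sup>2 - (x\<^sup>2 - S*h) = m\<^sup>2 - x\<^sup>2 + S*h" by simp
  also have "m\<^sup>2 - x\<^sup>2 + S*h = (h+S)*S" using S by (simp add: power2_eq_square algebra_simps)
  finally show "-((x\<^sup>2 - S*h)/((h+S)*S)) + m*(m/((h+S)*S)) = 1" using nz by simp
  have "((x\<^sup>2 - S*h)/((h+S)*S))*h - (x/S)*x = ((x\<^sup>2 - S*h)*h)/((h+S)*S) - (x\<^sup>2*(h+S))/((h+S)*S)"
    using nz by (simp add: power2_eq_square)
  also have "\<dots> = ((x\<^sup>2 - S*h)*h - x\<^sup>2*(h+S))/((h+S)*S)" by (simp add: diff_divide_distrib)
  also have "(x\<^sup>2 - S*h)*h - x\<^sup>2*(h+S) = -S * (h\<^sup>2 + x\<^sup>2)" by (simp add: power2_eq_square algebra_simps)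
  also have "\<dots> = -S" using h by simp
  finally show "((x\<^sup>2 - S*h)/((h+S)*S))*h - (x/S)*x = -1/(h+S)" using nz by simp
  have f1: "1/((h+S)*h) = S/((h+S)*h*S)" using nz by simp
  have f2: "x\<^sup>2/(h*S) = (x\<^sup>2*(h+S))/((h+S)*h*S)" using nz by simp
  have "-(1/((h+S)*h)) + x\<^sup>2/(h*S) = (-S + x\<^sup>2*(h+S))/((h+S)*h*S)"
    by (simp only: f1 f2 add_divide_distrib minus_divide_left)
  also have "-S + x\<^sup>2*(h+S) = (x\<^sup>2 - S*h)*h - S*(1 - x\<^sup>2 - h\<^sup>2)" by (simp add: power2_eq_square algebra_simps)
  also have "\<dots> = (x\<^sup>2 - S*h)*h" using h by simp
  also have "(x\<^sup>2 - S*h)*h/((h+S)*h*S) = (x\<^sup>2 - S*h)/((h+S)*S)" using nz by simp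
  finally show "-(1/((h+S)*h)) + x\<^sup>2/(h*S) = (x\<^sup>2 - S*h)/((h+S)*S)" .
  have "(1*S - x*(-x/S))/(S*S) = (S\<^sup>2 + x\<^sup>2)/S^3" using nz by (simp add: field_simps power2_eq_square power3_eq_cube)
  also have "S\<^sup>2 + x\<^sup>2 = m\<^sup>2" using S by simp
  finally show "(1*S - x*(-x/S))/(S*S) = m\<^sup>2/S^3" .
qed

context traj begin

definition c0 where "c0 = sqrt (1 - \<mu>\<^sup>2)"

lemma c0_pos: "c0 > 0" unfolding c0_def using mu by (simp add: power_less_one_iff abs_square_less_1)

lemma c0_sq: "c0\<^sup>2 = 1 - \<mu>\<^sup>2" unfolding c0_def using mu
  by (simp add: abs_square_le_1 less_imp_le)

lemma cos_range: assumes "\<phi> \<in> {\<theta>t..\<theta>}" shows "-\<mu> \<le> cos \<phi>" "cos \<phi> \<le> \<mu>"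
proof -
  have "cos \<phi> \<le> cos \<theta>t" using assms th by (intro cos_monotone_0_pi_le) auto
  thus "cos \<phi> \<le> \<mu>" using cos_tht_le by simp
  have "cos \<theta> \<le> cos \<phi>" using assms th by (intro cos_monotone_0_pi_le) auto
  thus "-\<mu> \<le> cos \<phi>" using cos_th by simp
qed

lemma cos_sq_le: assumes "\<phi> \<in> {\<theta>t..\<theta>}" shows "(cos \<phi>)\<^sup>2 \<le> \<mu>\<^sup>2"
proof -
  have "\<bar>cos \<phi>\<bar> \<le> \<bar>\<mu>\<bar>" using cos_range[OF assms] mu by auto
  thus ?thesis using abs_le_square_iff by blast
qed

lemma sin_range: assumes "\<phi> \<in> {\<theta>t..\<theta>}" shows "c0 \<le> sin \<phi>"
proof -
  have s0: "0 \<le> sin \<phi>" using assms th by (intro sin_ge_zero) auto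
  have "c0\<^sup>2 \<le> (sin \<phi>)\<^sup>2" using c0_sq cos_sq_le[OF assms] by (simp add: sin_squared_eq)
  thus ?thesis using s0 by (rule power2_le_imp_le)
qed

lemma Sg_ge_gen: assumes "\<phi> \<in> {\<theta>t..\<theta>}" "\<mu> \<le> m'" shows "c0 \<le> Sg m' \<phi>" "sin \<phi> \<le> Sg m' \<phi>"
proof -
  have "(cos \<phi>)\<^sup>2 \<le> m'\<^sup>2" using cos_sq_le[OF assms(1)] assms(2) mu
    by (meson order_trans power_mono less_imp_le)
  hence "0 \<le> sqrt (m'\<^sup>2 - (cos \<phi>)\<^sup>2)" by simp
  thus "sin \<phi> \<le> Sg m' \<phi>" unfolding Sg_def by simp
  thus "c0 \<le> Sg m' \<phi>" using sin_range[OF assms(1)] by simp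
qed

lemma inv_Sg_integrable:
  assumes "\<mu> \<le> m'" shows "(\<lambda>\<phi>. 1 / Sg m' \<phi>) integrable_on {\<theta>t..\<theta>}"
proof -
  have "continuous_on {\<theta>t..\<theta>} (\<lambda>\<phi>. 1 / (sin \<phi> + sqrt (m'\<^sup>2 - (cos \<phi>)\<^sup>2)))"
  proof (intro continuous_intros ballI)
    fix \<phi> assume "\<phi> \<in> {\<theta>t..\<theta>}"
    thus "sin \<phi> + sqrt (m'\<^sup>2 - (cos \<phi>)\<^sup>2) \<noteq> 0" using Sg_ge_gen[of \<phi> m'] assms c0_pos
      unfolding Sg_def by auto
  qed
  thus ?thesis unfolding Sg_def by (rule integrable_continuous_interval)
qed

end

locale traj_m = traj +
  fixes m :: real
  assumes m: "\<mu> < m" "m < 1"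
begin

definition hh where "hh y = sqrt (1 - y\<^sup>2)"
definition SS where "SS y = sqrt (m\<^sup>2 - y\<^sup>2)"
definition kk where "kk y = y / SS y"
definition aa where "aa y = (y\<^sup>2 - SS y * hh y) / ((hh y + SS y) * SS y)"
definition F1 where "F1 y = tau c0 m \<theta>t (arccos y) - kk y * hh y"
definition Wa where "Wa z = F1 (fst z) + kk (fst z) * snd z"
definition Wl where "Wl z = aa (cos \<theta>t) * (fst z - cos \<theta>t) + kk (cos \<theta>t) * (snd z - sin \<theta>t)"

lemma m_pos: "0 < m" using m mu by simp

lemma ff_eq: assumes "\<phi> \<in> {\<theta>t..\<theta>}" shows "ff c0 m \<phi> = 1 / Sg m \<phi>"
  using Sg_ge_gen[OF assms, of m] m unfolding ff_def by (simp add: max_def)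

lemma xr: assumes "cos \<theta> \<le> y" "y \<le> cos \<theta>t"
  shows "-\<mu> \<le> y" "y \<le> \<mu>" "y\<^sup>2 < m\<^sup>2" "y\<^sup>2 < 1" "-1 < y" "y < 1"
proof -
  show a: "-\<mu> \<le> y" "y \<le> \<mu>" using assms cos_th cos_tht_le by auto
  have "\<bar>y\<bar> < m" using a m mu by auto
  hence "\<bar>y\<bar>\<^sup>2 < m\<^sup>2" by (intro power_strict_mono) auto
  thus "y\<^sup>2 < m\<^sup>2" by simp
  have "\<bar>y\<bar> < 1" using a mu by auto
  hence "\<bar>y\<bar>\<^sup>2 < 1\<^sup>2" by (intro power_strict_mono) auto
  thus "y\<^sup>2 < 1" by simp
  show "-1 < y" "y < 1" using a mu by auto
qed

lemma hS: assumes "cos \<theta> \<le> y" "y \<le> cos \<theta>t"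
  shows "hh y > 0" "(hh y)\<^sup>2 = 1 - y\<^sup>2" "SS y > 0" "(SS y)\<^sup>2 = m\<^sup>2 - y\<^sup>2"
  using xr[OF assms] unfolding hh_def SS_def by auto

lemma arc_pt: assumes "cos \<theta> \<le> y" "y \<le> cos \<theta>t"
  shows "arccos y \<in> {\<theta>t..\<theta>}" "cos (arccos y) = y" "sin (arccos y) = hh y"
    "Sg m (arccos y) = hh y + SS y"
proof -
  have y1: "-1 < y" "y < 1" using xr[OF assms] by auto
  have "arccos (cos \<theta>t) \<le> arccos y" using assms y1 by (intro arccos_le_arccos) auto
  moreover have "arccos (cos \<theta>t) = \<theta>t" using th th_lt_pi by (intro arccos_cos) auto
  moreover have "arccos y \<le> arccos (cos \<theta>)" using assms y1 by (intro arccos_le_arccos) auto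
  moreover have "arccos (cos \<theta>) = \<theta>" using th th_lt_pi by (intro arccos_cos) auto
  ultimately show "arccos y \<in> {\<theta>t..\<theta>}" by simp
  show c: "cos (arccos y) = y" using y1 by simp
  show s: "sin (arccos y) = hh y" using y1 unfolding hh_def by (simp add: sin_arccos)
  show "Sg m (arccos y) = hh y + SS y" unfolding Sg_def c s SS_def by simp
qed

lemma hh_cos: "hh (cos \<phi>) = sin \<phi>" if "0 \<le> \<phi>" "\<phi> \<le> pi"
proof -
  have "0 \<le> sin \<phi>" using that by (rule sin_ge_zero)
  thus ?thesis unfolding hh_def by (simp add: sin_squared_eq[symmetric])
qed

lemma hjb_lin:
  assumes X: "cos \<theta> \<le> X" "X \<le> cos \<theta>t" and d: "(d1 + L)\<^sup>2 + d2\<^sup>2 \<le> (\<mu>*L)\<^sup>2" and L: "0 \<le> L"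
  shows "aa X * d1 + kk X * d2 \<le> L"
proof -
  note H = hS[OF X]
  define M where "M = m / ((hh X + SS X) * SS X)"
  have M0: "0 \<le> M" unfolding M_def using H m mu by simp
  note A = alg_main[OF H(1,2) H(3,4) m_pos]
  have a_eq: "aa X = (X\<^sup>2 - SS X * hh X)/((hh X + SS X)*SS X)" by (simp add: aa_def)
  have k_eq: "kk X = X / SS X" by (simp add: kk_def)
  have I1: "(aa X)\<^sup>2 + (kk X)\<^sup>2 = M\<^sup>2" using A(1) m mu unfolding a_eq k_eq M_def by simp
  have I2: "- aa X + m * M = 1" using A(2) m mu unfolding a_eq M_def by simp
  have cs: "\<bar>aa X * (d1 + L) + kk X * d2\<bar> \<le> M * (\<mu> * L)"
    by (rule cs_bound[OF d I1]) (use mu L M0 in auto)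
  have "\<mu> * L \<le> m * L" using L m by (intro mult_right_mono) auto
  hence "M * (\<mu> * L) \<le> M * (m * L)" using M0 by (intro mult_left_mono) auto
  hence "aa X * (d1 + L) + kk X * d2 \<le> M * (m * L)" using cs by simp
  moreover have "aa X * d1 + kk X * d2 = (aa X * (d1 + L) + kk X * d2) - aa X * L"
    by (simp add: algebra_simps)
  moreover have "M * (m * L) - aa X * L = L * (- aa X + m * M)" by (simp add: algebra_simps)
  ultimately show ?thesis using I2 by simp
qed

lemma hjb_arc:
  assumes X: "cos \<theta> \<le> X" "X \<le> cos \<theta>t" and Y: "hh X \<le> Y"
    and d: "(d1 + L)\<^sup>2 + d2\<^sup>2 \<le> (\<mu>*L)\<^sup>2" and L: "0 \<le> L"
  shows "(aa X + m\<^sup>2 / (SS X)^3 * (Y - hh X)) * d1 + kk X * d2 \<le> L"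
proof -
  have "(d1 + L)\<^sup>2 \<le> (\<mu>*L)\<^sup>2" using d zero_le_power2[of d2] by linarith
  hence "\<bar>d1 + L\<bar> \<le> \<bar>\<mu>*L\<bar>" using abs_le_square_iff by blast
  hence "d1 + L \<le> \<mu> * L" using mu L by (simp add: abs_mult)
  moreover have "\<mu> * L \<le> L" using mu L by (simp add: mult_left_le_one_le)
  ultimately have d1: "d1 \<le> 0" by simp
  have "0 \<le> m\<^sup>2 / (SS X)^3 * (Y - hh X)" using hS[OF X] Y by simp
  hence "m\<^sup>2 / (SS X)^3 * (Y - hh X) * d1 \<le> 0" using d1 by (rule mult_nonneg_nonpos)
  moreover have "aa X * d1 + kk X * d2 \<le> L" by (rule hjb_lin[OF X d L])
  ultimately show ?thesis by (simp add: algebra_simps)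
qed

lemma F1_deriv:
  assumes X: "cos \<theta> \<le> X" "X \<le> cos \<theta>t"
  shows "(F1 has_real_derivative (aa X - m\<^sup>2 / (SS X)^3 * hh X)) (at X)"
proof -
  note H = hS[OF X]
  note P = arc_pt[OF X]
  have y1: "-1 < X" "X < 1" using xr[OF X] by auto
  have p: "\<theta>t - 1 < arccos X" using P(1) by simp
  have dt: "((\<lambda>y. tau c0 m \<theta>t (arccos y)) has_real_derivative
           ff c0 m (arccos X) * inverse (- sqrt (1 - X\<^sup>2))) (at X)"
    by (rule DERIV_chain2[OF tau_deriv[OF c0_pos p] DERIV_arccos[OF y1]])
  have v1: "ff c0 m (arccos X) * inverse (- sqrt (1 - X\<^sup>2)) = -(1/((hh X + SS X) * hh X))"
    using ff_eq[OF P(1)] P(4) unfolding hh_def[symmetric] by (simp add: field_simps)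
  have g1: "((\<lambda>y. 1 - y\<^sup>2) has_real_derivative -(2*X)) (at X)"
    by (auto intro!: derivative_eq_intros)
  have pos1: "0 < 1 - X\<^sup>2" using xr[OF X] by simp
  have dh0: "((\<lambda>y. sqrt (1 - y\<^sup>2)) has_real_derivative inverse (sqrt (1 - X\<^sup>2)) / 2 * (-(2*X))) (at X)"
    by (rule DERIV_chain2[OF DERIV_real_sqrt[OF pos1] g1])
  have hfun: "hh = (\<lambda>y. sqrt (1 - y\<^sup>2))" by (rule ext) (simp add: hh_def)
  have dh: "(hh has_real_derivative -X / hh X) (at X)"
    using dh0 unfolding hfun by (simp add: field_simps)
  have g2: "((\<lambda>y. m\<^sup>2 - y\<^sup>2) has_real_derivative -(2*X)) (at X)"
    by (auto intro!: derivative_eq_intros)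
  have pos2: "0 < m\<^sup>2 - X\<^sup>2" using xr[OF X] by simp
  have dS0: "((\<lambda>y. sqrt (m\<^sup>2 - y\<^sup>2)) has_real_derivative inverse (sqrt (m\<^sup>2 - X\<^sup>2)) / 2 * (-(2*X))) (at X)"
    by (rule DERIV_chain2[OF DERIV_real_sqrt[OF pos2] g2])
  have Sfun: "SS = (\<lambda>y. sqrt (m\<^sup>2 - y\<^sup>2))" by (rule ext) (simp add: SS_def)
  have dS: "(SS has_real_derivative -X / SS X) (at X)"
    using dS0 unfolding Sfun by (simp add: field_simps)
  have kfun: "kk = (\<lambda>y. y / SS y)" by (rule ext) (simp add: kk_def)
  have dk0: "(kk has_real_derivative (1 * SS X - X * (-X / SS X)) / (SS X * SS X)) (at X)"
    unfolding kfun by (rule DERIV_divide[OF DERIV_ident dS]) (use H in simp)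
  have dk: "(kk has_real_derivative m\<^sup>2 / (SS X)^3) (at X)"
    using dk0 alg_main(5)[OF H(1,2) H(3,4) m_pos] m mu by simp
  have F1fun: "F1 = (\<lambda>y. tau c0 m \<theta>t (arccos y) - kk y * hh y)" by (rule ext) (simp add: F1_def)
  have dF: "(F1 has_real_derivative
      (ff c0 m (arccos X) * inverse (- sqrt (1 - X\<^sup>2)) - (m\<^sup>2 / (SS X)^3 * hh X + (-X / hh X) * kk X))) (at X)"
    unfolding F1fun by (rule DERIV_diff[OF dt DERIV_mult[OF dk dh]])
  have e1: "(-X / hh X) * kk X = -(X\<^sup>2/(hh X * SS X))" unfolding kk_def
    by (simp add: power2_eq_square)
  have e2: "-(1/((hh X + SS X) * hh X)) + X\<^sup>2/(hh X * SS X) = aa X"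
    using alg_main(4)[OF H(1,2) H(3,4) m_pos] m mu by (simp add: aa_def)
  have val: "ff c0 m (arccos X) * inverse (- sqrt (1 - X\<^sup>2)) - (m\<^sup>2 / (SS X)^3 * hh X + (-X / hh X) * kk X)
        = aa X - m\<^sup>2 / (SS X)^3 * hh X"
  proof -
    have "ff c0 m (arccos X) * inverse (- sqrt (1 - X\<^sup>2)) - (m\<^sup>2 / (SS X)^3 * hh X + (-X / hh X) * kk X)
        = -(1/((hh X + SS X) * hh X)) - (m\<^sup>2 / (SS X)^3 * hh X + -(X\<^sup>2/(hh X * SS X)))"
      by (simp only: v1 e1)
    also have "\<dots> = (-(1/((hh X + SS X) * hh X)) + X\<^sup>2/(hh X * SS X)) - m\<^sup>2 / (SS X)^3 * hh X"
      by simp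
    also have "\<dots> = aa X - m\<^sup>2 / (SS X)^3 * hh X" by (simp only: e2)
    finally show ?thesis .
  qed
  show ?thesis using dF by (simp only: val)
qed

lemma dk_deriv:
  assumes X: "cos \<theta> \<le> X" "X \<le> cos \<theta>t"
  shows "(kk has_real_derivative m\<^sup>2 / (SS X)^3) (at X)"
proof -
  note H = hS[OF X]
  have g2: "((\<lambda>y. m\<^sup>2 - y\<^sup>2) has_real_derivative -(2*X)) (at X)"
    by (auto intro!: derivative_eq_intros)
  have pos2: "0 < m\<^sup>2 - X\<^sup>2" using xr[OF X] by simp
  have dS0: "((\<lambda>y. sqrt (m\<^sup>2 - y\<^sup>2)) has_real_derivative inverse (sqrt (m\<^sup>2 - X\<^sup>2)) / 2 * (-(2*X))) (at X)"
    by (rule DERIV_chain2[OF DERIV_real_sqrt[OF pos2] g2])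
  have Sfun: "SS = (\<lambda>y. sqrt (m\<^sup>2 - y\<^sup>2))" by (rule ext) (simp add: SS_def)
  have dS: "(SS has_real_derivative -X / SS X) (at X)"
    using dS0 unfolding Sfun by (simp add: field_simps)
  have kfun: "kk = (\<lambda>y. y / SS y)" by (rule ext) (simp add: kk_def)
  have dk0: "(kk has_real_derivative (1 * SS X - X * (-X / SS X)) / (SS X * SS X)) (at X)"
    unfolding kfun by (rule DERIV_divide[OF DERIV_ident dS]) (use H in simp)
  thus ?thesis using alg_main(5)[OF H(1,2) H(3,4) m_pos] m mu by simp
qed

lemma Wa_deriv:
  assumes X: "cos \<theta> \<le> X" "X \<le> cos \<theta>t"
  shows "(Wa has_derivative (\<lambda>d. fst d * (aa X - m\<^sup>2 / (SS X)^3 * hh X) +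
            (kk X * snd d + fst d * (m\<^sup>2 / (SS X)^3) * Y))) (at (X, Y))"
proof -
  have d1: "DERIV F1 (fst (X, Y)) :> (aa X - m\<^sup>2 / (SS X)^3 * hh X)" using F1_deriv[OF X] by simp
  have d2: "DERIV kk (fst (X, Y)) :> m\<^sup>2 / (SS X)^3" using dk_deriv[OF X] by simp
  have f: "((\<lambda>z::real\<times>real. fst z) has_derivative (\<lambda>z. fst z)) (at (X, Y))"
    by (rule has_derivative_fst[OF has_derivative_ident])
  have s: "((\<lambda>z::real\<times>real. snd z) has_derivative (\<lambda>z. snd z)) (at (X, Y))"
    by (rule has_derivative_snd[OF has_derivative_ident])
  have a1: "((\<lambda>z. F1 (fst z)) has_derivative (\<lambda>d. fst d * (aa X - m\<^sup>2 / (SS X)^3 * hh X))) (at (X, Y))"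
    by (rule DERIV_compose_FDERIV[OF d1 f])
  have a2: "((\<lambda>z. kk (fst z)) has_derivative (\<lambda>d. fst d * (m\<^sup>2 / (SS X)^3))) (at (X, Y))"
    by (rule DERIV_compose_FDERIV[OF d2 f])
  have a3: "((\<lambda>z. kk (fst z) * snd z) has_derivative
      (\<lambda>d. kk (fst (X, Y)) * snd d + fst d * (m\<^sup>2 / (SS X)^3) * snd (X, Y))) (at (X, Y))"
    by (rule has_derivative_mult[OF a2 s])
  have a4: "((\<lambda>z. F1 (fst z) + kk (fst z) * snd z) has_derivative
      (\<lambda>d. fst d * (aa X - m\<^sup>2 / (SS X)^3 * hh X) +
          (kk (fst (X, Y)) * snd d + fst d * (m\<^sup>2 / (SS X)^3) * snd (X, Y)))) (at (X, Y))"
    by (rule has_derivative_add[OF a1 a3])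
  have Wfun: "Wa = (\<lambda>z. F1 (fst z) + kk (fst z) * snd z)" by (rule ext) (simp add: Wa_def)
  show ?thesis using a4 unfolding Wfun by simp
qed

end

context traj_m begin

lemma Wa_cont: assumes X: "cos \<theta> \<le> X" "X \<le> cos \<theta>t" shows "isCont Wa (X, Y)"
  using has_derivative_continuous[OF Wa_deriv[OF X, of Y]] .

lemma arc_local:
  assumes tP: "0 \<le> tP" "fst (x tP) = cos \<theta>t" and t: "tP \<le> t" "t < T" and e: "e > 0"
  shows "\<exists>d>0. \<forall>s. t < s \<and> s < t + d \<and> s \<le> T \<longrightarrow> Wa (x s) - Wa (x t) \<le> (1 + e) * (s - t)"
proof -
  obtain X Y where p: "x t = (X, Y)" by (cases "x t")
  have ab: "cos \<theta> \<le> X \<and> X \<le> cos \<theta>t \<and> Y > 0 \<and> sqrt (1 - X\<^sup>2) \<le> Y"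
    using above[OF tP t(1) less_imp_le[OF t(2)]] p by simp
  hence X: "cos \<theta> \<le> X" "X \<le> cos \<theta>t" and Y: "hh X \<le> Y" unfolding hh_def by auto
  define Kc where "Kc = m\<^sup>2 / (SS X)^3"
  define D where "D = (\<lambda>d::real\<times>real. fst d * (aa X - Kc * hh X) +
            (kk X * snd d + fst d * Kc * Y))"
  have der: "(Wa has_derivative D) (at (X, Y) within UNIV)" unfolding D_def Kc_def by (rule Wa_deriv[OF X])
  have "e/2 > 0" using e by simp
  then obtain \<delta> where \<delta>: "\<delta> > 0"
    "\<And>z. z \<in> UNIV \<Longrightarrow> norm (z - (X, Y)) < \<delta> \<Longrightarrow>
        norm (Wa z - Wa (X, Y) - D (z - (X, Y))) \<le> e/2 * norm (z - (X, Y))"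
    using der unfolding has_derivative_within_alt by blast
  show ?thesis
  proof (intro exI[of _ "\<delta>/2"] conjI allI impI)
    show "\<delta>/2 > 0" using \<delta> by simp
    fix s assume s: "t < s \<and> s < t + \<delta>/2 \<and> s \<le> T"
    have t0: "0 \<le> t" using tP t by simp
    have nd: "norm (x s - (X, Y)) \<le> 2 * (s - t)" using normdiff[of t s] s t0 p by simp
    hence "norm (x s - (X, Y)) < \<delta>" using s by simp
    hence b: "norm (Wa (x s) - Wa (X, Y) - D (x s - (X, Y))) \<le> e/2 * norm (x s - (X, Y))"
      using \<delta>(2) by simp
    define d1 where "d1 = fst (x s) - X"
    define d2 where "d2 = snd (x s) - Y"
    have ch: "(d1 + (s - t))\<^sup>2 + d2\<^sup>2 \<le> (\<mu> * (s - t))\<^sup>2"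
      using chord[of t s] t0 s p unfolding d1_def d2_def by simp
    have Dv: "D (x s - (X, Y)) = (aa X + Kc * (Y - hh X)) * d1 + kk X * d2"
      unfolding D_def d1_def d2_def by (simp add: algebra_simps)
    have "D (x s - (X, Y)) \<le> s - t" unfolding Dv Kc_def
      by (rule hjb_arc[OF X Y ch]) (use s in simp)
    moreover have "Wa (x s) - Wa (X, Y) \<le> D (x s - (X, Y)) + e/2 * norm (x s - (X, Y))"
    proof -
      have "Wa (x s) - Wa (X, Y) - D (x s - (X, Y)) \<le> e/2 * norm (x s - (X, Y))"
        using b unfolding real_norm_def by (rule order_trans[OF abs_ge_self])
      thus ?thesis by linarith
    qed
    moreover have "e/2 * norm (x s - (X, Y)) \<le> e * (s - t)"
    proof -
      have "e/2 * norm (x s - (X, Y)) \<le> e/2 * (2 * (s - t))"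
        using nd e by (intro mult_left_mono) auto
      also have "\<dots> = e * (s - t)" by simp
      finally show ?thesis .
    qed
    ultimately have "Wa (x s) - Wa (X, Y) \<le> (s - t) + e * (s - t)" by linarith
    thus "Wa (x s) - Wa (x t) \<le> (1 + e) * (s - t)" using p by (simp add: algebra_simps)
  qed
qed

lemma arc_total:
  assumes tP: "0 \<le> tP" "fst (x tP) = cos \<theta>t" "tP \<le> T"
  shows "Wa (x T) - Wa (x tP) \<le> T - tP"
proof (rule growth_lemma[where g = "\<lambda>t. Wa (x t)", OF tP(3)])
  have cx: "continuous_on {tP..T} x" using x_cont by (rule continuous_on_subset) (use tP in auto)
  have "\<forall>p\<in>x ` {tP..T}. isCont Wa p"
  proof
    fix p assume "p \<in> x ` {tP..T}"
    then obtain t where t: "t \<in> {tP..T}" "p = x t" by auto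
    obtain X Y where pXY: "p = (X, Y)" by (cases p)
    have "x t = (X, Y)" using t pXY by simp
    hence "cos \<theta> \<le> X \<and> X \<le> cos \<theta>t" using above[OF tP(1,2), of t] t by auto
    thus "isCont Wa p" using Wa_cont pXY by auto
  qed
  hence "continuous_on (x ` {tP..T}) Wa" by (rule continuous_at_imp_continuous_on)
  hence "continuous_on {tP..T} (Wa \<circ> x)" using cx by (intro continuous_on_compose)
  thus "continuous_on {tP..T} (\<lambda>t. Wa (x t))" by (simp add: o_def)
next
  fix t e assume "t \<in> {tP..<T}" "(e::real) > 0"
  thus "\<exists>d>0. \<forall>s. t < s \<and> s < t + d \<and> s \<le> T \<longrightarrow> Wa (x s) - Wa (x t) \<le> (1 + e) * (s - t)"
    using arc_local[OF tP(1,2)] by auto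
qed

lemma lower_m: "\<rho> / Sg m \<theta>t + integral {\<theta>t..\<theta>} (\<lambda>\<phi>. 1 / Sg m \<phi>) \<le> T"
proof -
  obtain tP where tP: "0 < tP" "tP \<le> T" "fst (x tP) = cos \<theta>t" using tP_ex by blast
  have cP: "cos \<theta> \<le> cos \<theta>t" "cos \<theta>t \<le> cos \<theta>t" using cos_le by auto
  have hP: "hh (cos \<theta>t) = sin \<theta>t" using th th_lt_pi by (intro hh_cos) auto
  have hT: "hh (cos \<theta>) = sin \<theta>" using th th_lt_pi by (intro hh_cos) auto
  have SgP: "Sg m \<theta>t = hh (cos \<theta>t) + SS (cos \<theta>t)" using hP unfolding Sg_def SS_def by simp
  note H = hS[OF cP]
  define d1 where "d1 = fst (x tP) - fst (x 0)"
  define d2 where "d2 = snd (x tP) - snd (x 0)"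
  have ch: "(d1 + (tP - 0))\<^sup>2 + d2\<^sup>2 \<le> (\<mu> * (tP - 0))\<^sup>2"
    using chord[of 0 tP] tP unfolding d1_def d2_def by simp
  have lin: "aa (cos \<theta>t) * d1 + kk (cos \<theta>t) * d2 \<le> tP - 0"
    by (rule hjb_lin[OF cP ch]) (use tP in simp)
  have Wl_diff: "Wl (x tP) - Wl (x 0) = aa (cos \<theta>t) * d1 + kk (cos \<theta>t) * d2"
    unfolding Wl_def d1_def d2_def by (simp add: algebra_simps)
  have Wl0: "Wl (x 0) = - \<rho> / Sg m \<theta>t"
  proof -
    have "Wl (x 0) = \<rho> * (aa (cos \<theta>t) * hh (cos \<theta>t) - kk (cos \<theta>t) * cos \<theta>t)"
      unfolding Wl_def x_at0 x0 y0 hP by (simp add: algebra_simps)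
    also have "aa (cos \<theta>t) * hh (cos \<theta>t) - kk (cos \<theta>t) * cos \<theta>t = -1 / Sg m \<theta>t"
      using alg_main(3)[OF H(1,2) H(3,4) m_pos] m mu SgP by (simp add: aa_def kk_def)
    finally show ?thesis by simp
  qed
  have WlP: "Wl (x tP) = kk (cos \<theta>t) * (snd (x tP) - sin \<theta>t)" unfolding Wl_def tP(3) by simp
  have arccosP: "arccos (cos \<theta>t) = \<theta>t" using th th_lt_pi by (intro arccos_cos) auto
  have arccosT: "arccos (cos \<theta>) = \<theta>" using th th_lt_pi by (intro arccos_cos) auto
  have WaP: "Wa (x tP) = kk (cos \<theta>t) * (snd (x tP) - sin \<theta>t)"
    unfolding Wa_def F1_def tP(3) arccosP tau_a hP by (simp add: algebra_simps)
  have WaT: "Wa (x T) = tau c0 m \<theta>t \<theta>" by (simp add: Wa_def F1_def fin arccosT hT)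
  have tauT: "tau c0 m \<theta>t \<theta> = integral {\<theta>t..\<theta>} (\<lambda>\<phi>. 1 / Sg m \<phi>)"
    using tau_eq[OF c0_pos th(2)] integral_cong[of "{\<theta>t..\<theta>}" "ff c0 m" "\<lambda>\<phi>. 1 / Sg m \<phi>"] ff_eq
    by simp
  have arc: "Wa (x T) - Wa (x tP) \<le> T - tP" using arc_total[of tP] tP by simp
  show ?thesis using arc lin Wl_diff Wl0 WlP WaP WaT tauT by simp
qed

end

context traj begin

lemma lower: "\<rho> / Sg \<mu> \<theta>t + integral {\<theta>t..\<theta>} (\<lambda>\<phi>. 1 / Sg \<mu> \<phi>) \<le> T"
proof -
  define K where "K = (\<rho> + (\<theta> - \<theta>t)) / (1 - \<mu>\<^sup>2)"
  define L where "L = (\<lambda>m'. \<rho> / Sg m' \<theta>t + integral {\<theta>t..\<theta>} (\<lambda>\<phi>. 1 / Sg m' \<phi>))"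
  have mu2: "\<mu>\<^sup>2 < 1" using mu by (simp add: power_less_one_iff abs_square_less_1)
  have K0: "K \<ge> 0" unfolding K_def using rho th mu2 by simp
  have step: "L \<mu> \<le> T + K * \<delta>" if \<delta>: "0 < \<delta>" "\<delta>\<^sup>2 < 1 - \<mu>\<^sup>2" for \<delta>
  proof -
    define m where "m = sqrt (\<mu>\<^sup>2 + \<delta>\<^sup>2)"
    have m1: "\<mu> < m"
    proof -
      have "\<mu>\<^sup>2 < \<mu>\<^sup>2 + \<delta>\<^sup>2" using \<delta> by simp
      thus ?thesis unfolding m_def by (rule real_less_rsqrt)
    qed
    have m2: "m < 1" unfolding m_def using \<delta> by (simp add: real_sqrt_less_iff)
    have msq: "m\<^sup>2 = \<mu>\<^sup>2 + \<delta>\<^sup>2" unfolding m_def by simp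
    have tm: "traj_m \<mu> x0 y0 \<theta>t \<theta> \<rho> \<psi> T x m"
      unfolding traj_m_def traj_m_axioms_def using traj_axioms m1 m2 by simp
    have lm: "L m \<le> T" unfolding L_def by (rule traj_m.lower_m[OF tm])
    define q where "q = \<delta> / (1 - \<mu>\<^sup>2)"
    have pt: "1 / Sg \<mu> \<phi> \<le> 1 / Sg m \<phi> + q" if \<phi>: "\<phi> \<in> {\<theta>t..\<theta>}" for \<phi>
    proof -
      have A: "c0 \<le> Sg \<mu> \<phi>" using Sg_ge_gen[OF \<phi>, of \<mu>] by simp
      have B: "c0 \<le> Sg m \<phi>" using Sg_ge_gen[OF \<phi>, of m] m1 by simp
      have cs: "(cos \<phi>)\<^sup>2 \<le> \<mu>\<^sup>2" by (rule cos_sq_le[OF \<phi>])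
      have "sqrt (m\<^sup>2 - (cos \<phi>)\<^sup>2) = sqrt ((\<mu>\<^sup>2 - (cos \<phi>)\<^sup>2) + \<delta>\<^sup>2)" using msq by simp
      also have "\<dots> \<le> sqrt (\<mu>\<^sup>2 - (cos \<phi>)\<^sup>2) + sqrt (\<delta>\<^sup>2)"
        by (rule sqrt_add_le_add_sqrt) (use cs in auto)
      finally have "Sg m \<phi> - Sg \<mu> \<phi> \<le> \<delta>" unfolding Sg_def using \<delta> by simp
      moreover have "Sg \<mu> \<phi> \<le> Sg m \<phi>" unfolding Sg_def using m1 mu by (simp add: power_strict_mono less_imp_le)
      moreover have c0p: "c0 > 0" by (rule c0_pos)
      ultimately have "1 / Sg \<mu> \<phi> - 1 / Sg m \<phi> \<le> \<delta> / c0\<^sup>2"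
      proof -
        have pA: "Sg \<mu> \<phi> > 0" "Sg m \<phi> > 0" using A B c0p by auto
        have "1 / Sg \<mu> \<phi> - 1 / Sg m \<phi> = (Sg m \<phi> - Sg \<mu> \<phi>) / (Sg \<mu> \<phi> * Sg m \<phi>)"
          using pA by (simp add: field_simps)
        also have "\<dots> \<le> (Sg m \<phi> - Sg \<mu> \<phi>) / c0\<^sup>2"
        proof (rule divide_left_mono)
          show "0 \<le> Sg m \<phi> - Sg \<mu> \<phi>" using \<open>Sg \<mu> \<phi> \<le> Sg m \<phi>\<close> by simp
          have "c0 * c0 \<le> Sg \<mu> \<phi> * Sg m \<phi>" using A B c0p by (intro mult_mono) auto
          thus "c0\<^sup>2 \<le> Sg \<mu> \<phi> * Sg m \<phi>" by (simp add: power2_eq_square)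
          show "0 < Sg \<mu> \<phi> * Sg m \<phi> * c0\<^sup>2" using pA c0p by simp
        qed
        also have "\<dots> \<le> \<delta> / c0\<^sup>2" using \<open>Sg m \<phi> - Sg \<mu> \<phi> \<le> \<delta>\<close> c0p by (simp add: divide_right_mono)
        finally show ?thesis .
      qed
      thus ?thesis unfolding q_def c0_sq by simp
    qed
    have i1: "integral {\<theta>t..\<theta>} (\<lambda>\<phi>. 1 / Sg \<mu> \<phi>) \<le> integral {\<theta>t..\<theta>} (\<lambda>\<phi>. 1 / Sg m \<phi> + q)"
      by (rule integral_le[OF inv_Sg_integrable integrable_add[OF inv_Sg_integrable]])
         (use pt m1 in \<open>auto intro: integrable_continuous_interval\<close>)
    have i2: "integral {\<theta>t..\<theta>} (\<lambda>\<phi>. 1 / Sg m \<phi> + q) = integral {\<theta>t..\<theta>} (\<lambda>\<phi>. 1 / Sg m \<phi>) + (\<theta> - \<theta>t) * q"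
    proof -
      have "integral {\<theta>t..\<theta>} (\<lambda>\<phi>. 1 / Sg m \<phi> + q) = integral {\<theta>t..\<theta>} (\<lambda>\<phi>. 1 / Sg m \<phi>) + integral {\<theta>t..\<theta>} (\<lambda>\<phi>. q)"
        by (rule integral_add[OF inv_Sg_integrable]) (use m1 in \<open>auto intro: integrable_continuous_interval\<close>)
      thus ?thesis using th by simp
    qed
    have pt0: "1 / Sg \<mu> \<theta>t \<le> 1 / Sg m \<theta>t + q" using pt[of \<theta>t] th by simp
    have "\<rho> * (1 / Sg \<mu> \<theta>t) \<le> \<rho> * (1 / Sg m \<theta>t + q)" using pt0 rho by (intro mult_left_mono) auto
    hence hL: "L \<mu> \<le> L m + \<rho> * q + (\<theta> - \<theta>t) * q" unfolding L_def using i1 i2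
      by (simp add: algebra_simps)
    have "\<rho> * q + (\<theta> - \<theta>t) * q = (\<rho> + (\<theta> - \<theta>t)) * q" by (simp add: algebra_simps)
    also have "\<dots> = K * \<delta>" unfolding K_def q_def by simp
    finally have "\<rho> * q + (\<theta> - \<theta>t) * q = K * \<delta>" .
    thus ?thesis using lm hL by linarith
  qed
  show ?thesis
  proof (rule ccontr)
    assume "\<not> ?thesis"
    hence g: "L \<mu> - T > 0" unfolding L_def by simp
    define \<delta> where "\<delta> = min ((L \<mu> - T) / (2 * (K + 1))) (sqrt (1 - \<mu>\<^sup>2) / 2)"
    have d0: "0 < \<delta>" unfolding \<delta>_def using g K0 mu2 by simp
    have "\<delta> \<le> sqrt (1 - \<mu>\<^sup>2) / 2" unfolding \<delta>_def by (rule min.cobounded2)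
    hence "\<delta>\<^sup>2 \<le> (sqrt (1 - \<mu>\<^sup>2) / 2)\<^sup>2" using d0 by (intro power_mono) auto
    also have "\<dots> = (1 - \<mu>\<^sup>2) / 4" using mu2 by (simp add: power_divide)
    also have "\<dots> < 1 - \<mu>\<^sup>2" using mu2 by simp
    finally have d1: "\<delta>\<^sup>2 < 1 - \<mu>\<^sup>2" .
    have "L \<mu> \<le> T + K * \<delta>" by (rule step[OF d0 d1])
    moreover have "K * \<delta> \<le> K * ((L \<mu> - T) / (2 * (K + 1)))" unfolding \<delta>_def using K0
      by (intro mult_left_mono) auto
    moreover have "K * ((L \<mu> - T) / (2 * (K + 1))) < L \<mu> - T"
    proof -
      have "K / (2 * (K + 1)) < 1" using K0 by simp
      hence "K / (2 * (K + 1)) * (L \<mu> - T) < 1 * (L \<mu> - T)" using g by (intro mult_strict_right_mono) auto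
      thus ?thesis by simp
    qed
    ultimately show False by simp
  qed
qed

end

lemma half_angle:
  fixes a b :: real
  assumes ab: "a\<^sup>2 + b\<^sup>2 = 1" and a1: "a < 1"
  shows "cos (pi - 2 * arctan (b / (1 - a))) = a" "sin (pi - 2 * arctan (b / (1 - a))) = b"
proof -
  define u where "u = b / (1 - a)"
  define z where "z = arctan u"
  have na: "1 - a \<noteq> 0" "1 - a > 0" using a1 by auto
  have w: "1 + u\<^sup>2 = 2 / (1 - a)"
  proof -
    have "1 + u\<^sup>2 = ((1 - a)\<^sup>2 + b\<^sup>2) / (1 - a)\<^sup>2" unfolding u_def using na
      by (simp add: power_divide field_simps)
    also have "(1 - a)\<^sup>2 + b\<^sup>2 = 2 * (1 - a)" using ab by (simp add: power2_eq_square algebra_simps)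
    also have "2 * (1 - a) / (1 - a)\<^sup>2 = 2 / (1 - a)"
      unfolding power2_eq_square by (rule nonzero_mult_divide_mult_cancel_right[OF na(1)])
    finally show ?thesis .
  qed
  have wpos: "1 + u\<^sup>2 > 0" by (simp add: add_pos_nonneg)
  have c2: "(cos z)\<^sup>2 = 1 / (1 + u\<^sup>2)" unfolding z_def cos_arctan using wpos
    by (simp add: power_divide)
  have s2: "(sin z)\<^sup>2 = u\<^sup>2 / (1 + u\<^sup>2)" unfolding z_def sin_arctan using wpos
    by (simp add: power_divide)
  have sc: "sin z * cos z = u / (1 + u\<^sup>2)" unfolding z_def sin_arctan cos_arctan using wpos
    by (simp add: power2_eq_square[symmetric])
  have u2: "u\<^sup>2 = (1 + a) / (1 - a)"
  proof -
    have "u\<^sup>2 = b\<^sup>2 / (1 - a)\<^sup>2" unfolding u_def by (simp add: power_divide)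
    also have "b\<^sup>2 = (1 - a) * (1 + a)" using ab by (simp add: power2_eq_square algebra_simps)
    also have "(1 - a) * (1 + a) / (1 - a)\<^sup>2 = (1 + a) / (1 - a)"
      unfolding power2_eq_square by (rule nonzero_mult_divide_mult_cancel_left[OF na(1)])
    finally show ?thesis .
  qed
  have "cos (pi - 2 * z) = - ((cos z)\<^sup>2 - (sin z)\<^sup>2)" by (simp add: cos_double)
  also have "\<dots> = (u\<^sup>2 - 1) / (1 + u\<^sup>2)" unfolding c2 s2 by (simp add: diff_divide_distrib)
  also have "\<dots> = a" unfolding w u2 using na by (simp add: field_simps)
  finally show "cos (pi - 2 * arctan (b / (1 - a))) = a" unfolding z_def u_def .
  have "sin (pi - 2 * z) = 2 * (sin z * cos z)" by (simp add: sin_double)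
  also have "\<dots> = 2 * u / (1 + u\<^sup>2)" unfolding sc by simp
  also have "\<dots> = b" unfolding w unfolding u_def using na by (simp add: field_simps)
  finally show "sin (pi - 2 * arctan (b / (1 - a))) = b" unfolding z_def u_def .
qed

locale cons =
  fixes \<mu> x0 y0 \<theta>t \<theta> \<rho> :: real
  assumes mu: "0 < \<mu>" "\<mu> < 1"
    and x0: "x0 = cos \<theta>t + \<rho> * sin \<theta>t" and y0: "y0 = sin \<theta>t - \<rho> * cos \<theta>t"
    and rho: "\<rho> > 0"
    and th: "0 < \<theta>t" "\<theta>t \<le> \<theta>" "\<theta> < pi"
    and cth: "-\<mu> \<le> cos \<theta>" and ctht: "cos \<theta>t \<le> \<mu>"
begin

definition c0 where "c0 = sqrt (1 - \<mu>\<^sup>2)"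
definition Tth where "Tth = tau c0 \<mu> \<theta>t \<theta>"
definition Phi where "Phi = inv_into {\<theta>t..\<theta>} (tau c0 \<mu> \<theta>t)"
definition T1 where "T1 = \<rho> / Sg \<mu> \<theta>t"
definition cl where "cl t = max 0 (min Tth (t - T1))"
definition Psi where "Psi \<phi> = pi - 2 * arctan ((Sg \<mu> \<phi> * cos \<phi> / \<mu>) / (1 - (1 - Sg \<mu> \<phi> * sin \<phi>) / \<mu>))"
definition psi where "psi t = Psi (Phi (cl t))"
definition V where "V t = rel_vel \<mu> (psi t)"
definition xx where "xx t = (x0, y0) + integral {0..t} V"

lemma c0_pos: "c0 > 0" unfolding c0_def using mu by (simp add: power_less_one_iff abs_square_less_1)

lemma mu2: "\<mu>\<^sup>2 < 1" using mu by (simp add: power_less_one_iff abs_square_less_1)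

lemma c0_sq: "c0\<^sup>2 = 1 - \<mu>\<^sup>2" unfolding c0_def using mu2 by simp

lemma cos_sq_le: assumes "\<phi> \<in> {\<theta>t..\<theta>}" shows "(cos \<phi>)\<^sup>2 \<le> \<mu>\<^sup>2"
proof -
  have "cos \<phi> \<le> cos \<theta>t" using assms th by (intro cos_monotone_0_pi_le) auto
  moreover have "cos \<theta> \<le> cos \<phi>" using assms th by (intro cos_monotone_0_pi_le) auto
  ultimately have "\<bar>cos \<phi>\<bar> \<le> \<bar>\<mu>\<bar>" using cth ctht mu by auto
  thus ?thesis using abs_le_square_iff by blast
qed

lemma sin_range: assumes "\<phi> \<in> {\<theta>t..\<theta>}" shows "c0 \<le> sin \<phi>"
proof -
  have s0: "0 \<le> sin \<phi>" using assms th by (intro sin_ge_zero) auto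
  have "c0\<^sup>2 \<le> (sin \<phi>)\<^sup>2" using c0_sq cos_sq_le[OF assms] by (simp add: sin_squared_eq)
  thus ?thesis using s0 by (rule power2_le_imp_le)
qed

lemma Sg_ge: assumes "\<phi> \<in> {\<theta>t..\<theta>}" shows "sin \<phi> \<le> Sg \<mu> \<phi>" "c0 \<le> Sg \<mu> \<phi>" "Sg \<mu> \<phi> > 0"
proof -
  show "sin \<phi> \<le> Sg \<mu> \<phi>" using cos_sq_le[OF assms] unfolding Sg_def by simp
  thus "c0 \<le> Sg \<mu> \<phi>" using sin_range[OF assms] by simp
  thus "Sg \<mu> \<phi> > 0" using c0_pos by simp
qed

lemma ff_eq: assumes "\<phi> \<in> {\<theta>t..\<theta>}" shows "ff c0 \<mu> \<phi> = 1 / Sg \<mu> \<phi>"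
  using Sg_ge[OF assms] unfolding ff_def by (simp add: max_def)

lemma Sg_sq: assumes "\<phi> \<in> {\<theta>t..\<theta>}"
  shows "(1 - Sg \<mu> \<phi> * sin \<phi>)\<^sup>2 + (Sg \<mu> \<phi> * cos \<phi>)\<^sup>2 = \<mu>\<^sup>2"
proof -
  define S where "S = sqrt (\<mu>\<^sup>2 - (cos \<phi>)\<^sup>2)"
  have S2: "S\<^sup>2 = \<mu>\<^sup>2 - (cos \<phi>)\<^sup>2" unfolding S_def using cos_sq_le[OF assms] by simp
  have sg: "Sg \<mu> \<phi> = sin \<phi> + S" unfolding Sg_def S_def ..
  have sc: "(sin \<phi>)\<^sup>2 + (cos \<phi>)\<^sup>2 = 1" by simp
  have "(1 - (sin \<phi> + S) * sin \<phi>)\<^sup>2 + ((sin \<phi> + S) * cos \<phi>)\<^sup>2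
      = 1 - 2 * (sin \<phi> + S) * sin \<phi> + (sin \<phi> + S)\<^sup>2 * ((sin \<phi>)\<^sup>2 + (cos \<phi>)\<^sup>2)"
    by algebra
  also have "\<dots> = 1 - 2 * (sin \<phi> + S) * sin \<phi> + (sin \<phi> + S)\<^sup>2" by (simp only: sc mult_1_right)
  also have "\<dots> = 1 - (sin \<phi>)\<^sup>2 + S\<^sup>2" by algebra
  also have "\<dots> = \<mu>\<^sup>2" using S2 sc by linarith
  finally show ?thesis unfolding sg .
qed

lemma heading: assumes "\<phi> \<in> {\<theta>t..\<theta>}"
  shows "\<mu> * cos (Psi \<phi>) - 1 = - (Sg \<mu> \<phi> * sin \<phi>)" "\<mu> * sin (Psi \<phi>) = Sg \<mu> \<phi> * cos \<phi>"
proof -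
  define a where "a = (1 - Sg \<mu> \<phi> * sin \<phi>) / \<mu>"
  define b where "b = Sg \<mu> \<phi> * cos \<phi> / \<mu>"
  have ab: "a\<^sup>2 + b\<^sup>2 = 1" unfolding a_def b_def using Sg_sq[OF assms] mu
    by (simp add: power_divide add_divide_distrib[symmetric])
  have "Sg \<mu> \<phi> * sin \<phi> \<ge> sin \<phi> * sin \<phi>"
    using Sg_ge[OF assms] sin_range[OF assms] c0_pos by (intro mult_right_mono) auto
  moreover have "sin \<phi> * sin \<phi> \<ge> 1 - \<mu>\<^sup>2" using sin_range[OF assms] c0_sq c0_pos
    by (metis mult_mono less_imp_le power2_eq_square order_trans)
  ultimately have "1 - Sg \<mu> \<phi> * sin \<phi> \<le> \<mu> * \<mu>" by (simp add: power2_eq_square)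
  hence "a \<le> \<mu>" unfolding a_def using mu by (simp add: divide_le_eq)
  hence a1: "a < 1" using mu by simp
  have P: "Psi \<phi> = pi - 2 * arctan (b / (1 - a))" unfolding Psi_def a_def b_def ..
  show "\<mu> * cos (Psi \<phi>) - 1 = - (Sg \<mu> \<phi> * sin \<phi>)" unfolding P half_angle[OF ab a1]
    unfolding a_def using mu by simp
  show "\<mu> * sin (Psi \<phi>) = Sg \<mu> \<phi> * cos \<phi>" unfolding P half_angle[OF ab a1]
    unfolding b_def using mu by simp
qed

lemma Psi_cont: "continuous_on {\<theta>t..\<theta>} Psi"
proof -
  have ne: "1 - (1 - Sg \<mu> \<phi> * sin \<phi>) / \<mu> \<noteq> 0" if "\<phi> \<in> {\<theta>t..\<theta>}" for \<phi>
  proof -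
    have "Sg \<mu> \<phi> * sin \<phi> \<ge> sin \<phi> * sin \<phi>"
      using Sg_ge[OF that] sin_range[OF that] c0_pos by (intro mult_right_mono) auto
    moreover have "sin \<phi> * sin \<phi> \<ge> 1 - \<mu>\<^sup>2" using sin_range[OF that] c0_sq c0_pos
      by (metis mult_mono less_imp_le power2_eq_square order_trans)
    ultimately have "1 - Sg \<mu> \<phi> * sin \<phi> \<le> \<mu> * \<mu>" by (simp add: power2_eq_square)
    hence "(1 - Sg \<mu> \<phi> * sin \<phi>) / \<mu> \<le> \<mu>" using mu by (simp add: divide_le_eq)
    hence "0 < 1 - (1 - Sg \<mu> \<phi> * sin \<phi>) / \<mu>" using mu by linarith
    thus ?thesis by (metis less_irrefl)
  qed
  have "continuous_on {\<theta>t..\<theta>} (\<lambda>\<phi>. pi - 2 * arctan (((sin \<phi> + sqrt (\<mu>\<^sup>2 - (cos \<phi>)\<^sup>2)) * cos \<phi> / \<mu>) /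
          (1 - (1 - (sin \<phi> + sqrt (\<mu>\<^sup>2 - (cos \<phi>)\<^sup>2)) * sin \<phi>) / \<mu>)))"
    using ne mu unfolding Sg_def by (intro continuous_intros) auto
  thus ?thesis unfolding Psi_def Sg_def .
qed

lemma tau_d: "(tau c0 \<mu> \<theta>t has_real_derivative ff c0 \<mu> \<phi>) (at \<phi>)" if "\<theta>t - 1 < \<phi>" for \<phi>
  using tau_deriv[OF c0_pos that] .

lemma tau_cont: "continuous_on {\<theta>t..\<theta>} (tau c0 \<mu> \<theta>t)"
proof (rule continuous_at_imp_continuous_on, intro ballI)
  fix \<phi> assume "\<phi> \<in> {\<theta>t..\<theta>}"
  hence "\<theta>t - 1 < \<phi>" by simp
  thus "isCont (tau c0 \<mu> \<theta>t) \<phi>" using tau_d DERIV_isCont by blast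
qed

lemma tau_strict: assumes "\<theta>t \<le> a" "a < b" shows "tau c0 \<mu> \<theta>t a < tau c0 \<mu> \<theta>t b"
proof (rule DERIV_pos_imp_increasing[OF assms(2)])
  fix y assume "a \<le> y" "y \<le> b"
  hence "\<theta>t - 1 < y" using assms by simp
  thus "\<exists>z. DERIV (tau c0 \<mu> \<theta>t) y :> z \<and> z > 0" using tau_d ff_pos[OF c0_pos] by blast
qed

lemma tau_mono: assumes "\<theta>t \<le> a" "a \<le> b" shows "tau c0 \<mu> \<theta>t a \<le> tau c0 \<mu> \<theta>t b"
  using tau_strict[OF assms(1)] assms(2) by (cases "a = b") (auto simp: less_le)

lemma inj_tau: "inj_on (tau c0 \<mu> \<theta>t) {\<theta>t..\<theta>}"
proof (rule inj_onI)
  fix a b assume ab: "a \<in> {\<theta>t..\<theta>}" "b \<in> {\<theta>t..\<theta>}" "tau c0 \<mu> \<theta>t a = tau c0 \<mu> \<theta>t b"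
  show "a = b"
  proof (rule ccontr)
    assume "a \<noteq> b"
    hence "a < b \<or> b < a" by auto
    thus False using tau_strict[of a b] tau_strict[of b a] ab by auto
  qed
qed

lemma Tth_nonneg: "0 \<le> Tth" unfolding Tth_def using tau_mono[of \<theta>t \<theta>] th tau_a by simp

lemma tau_image: "tau c0 \<mu> \<theta>t ` {\<theta>t..\<theta>} = {0..Tth}"
proof
  show "tau c0 \<mu> \<theta>t ` {\<theta>t..\<theta>} \<subseteq> {0..Tth}"
    using tau_mono tau_a unfolding Tth_def by (force simp: tau_a)
  show "{0..Tth} \<subseteq> tau c0 \<mu> \<theta>t ` {\<theta>t..\<theta>}"
  proof
    fix t assume t: "t \<in> {0..Tth}"
    have "\<exists>\<phi>. \<theta>t \<le> \<phi> \<and> \<phi> \<le> \<theta> \<and> tau c0 \<mu> \<theta>t \<phi> = t"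
      by (rule IVT') (use t th tau_cont in \<open>auto simp: tau_a Tth_def\<close>)
    thus "t \<in> tau c0 \<mu> \<theta>t ` {\<theta>t..\<theta>}" by auto
  qed
qed

lemma Phi_props: assumes "t \<in> {0..Tth}"
  shows "Phi t \<in> {\<theta>t..\<theta>}" "tau c0 \<mu> \<theta>t (Phi t) = t"
proof -
  have "t \<in> tau c0 \<mu> \<theta>t ` {\<theta>t..\<theta>}" using assms tau_image by simp
  thus "Phi t \<in> {\<theta>t..\<theta>}" unfolding Phi_def by (rule inv_into_into)
  show "tau c0 \<mu> \<theta>t (Phi t) = t" unfolding Phi_def
    using f_inv_into_f[of t "tau c0 \<mu> \<theta>t" "{\<theta>t..\<theta>}"] \<open>t \<in> tau c0 \<mu> \<theta>t ` {\<theta>t..\<theta>}\<close> by simp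
qed

lemma Phi_tau: "\<phi> \<in> {\<theta>t..\<theta>} \<Longrightarrow> Phi (tau c0 \<mu> \<theta>t \<phi>) = \<phi>"
  unfolding Phi_def by (rule inv_into_f_f[OF inj_tau])

lemma Phi_0: "Phi 0 = \<theta>t" using Phi_tau[of \<theta>t] th by (simp add: tau_a)
lemma Phi_T: "Phi Tth = \<theta>" using Phi_tau[of \<theta>] th unfolding Tth_def by simp

lemma Phi_cont: "continuous_on {0..Tth} Phi"
proof -
  have "continuous_on (tau c0 \<mu> \<theta>t ` {\<theta>t..\<theta>}) Phi"
    unfolding Phi_def by (rule continuous_on_inv[OF tau_cont compact_Icc]) (auto intro: inv_into_f_f[OF inj_tau])
  thus ?thesis using tau_image by simp
qed

lemma Phi_mono: assumes "s \<in> {0..Tth}" "t \<in> {0..Tth}" "s \<le> t" shows "Phi s \<le> Phi t"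
proof (rule ccontr)
  assume "\<not> Phi s \<le> Phi t"
  hence "tau c0 \<mu> \<theta>t (Phi t) < tau c0 \<mu> \<theta>t (Phi s)"
    using tau_strict[of "Phi t" "Phi s"] Phi_props[OF assms(2)] by auto
  thus False using Phi_props(2)[OF assms(1)] Phi_props(2)[OF assms(2)] assms(3) by simp
qed

lemma Phi_deriv: assumes "0 < t" "t < Tth" shows "(Phi has_real_derivative Sg \<mu> (Phi t)) (at t)"
proof -
  have t: "t \<in> {0..Tth}" using assms by simp
  have d: "DERIV (tau c0 \<mu> \<theta>t) (Phi t) :> ff c0 \<mu> (Phi t)"
    using Phi_props(1)[OF t] by (intro tau_d) auto
  have "DERIV Phi t :> inverse (ff c0 \<mu> (Phi t))"
  proof (rule DERIV_inverse_function[where a=0 and b=Tth])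
    show "DERIV (tau c0 \<mu> \<theta>t) (Phi t) :> ff c0 \<mu> (Phi t)" by (rule d)
    show "0 < t" "t < Tth" using assms by auto
    show "ff c0 \<mu> (Phi t) \<noteq> 0" using ff_pos[OF c0_pos] by (simp add: less_imp_neq[symmetric])
    show "tau c0 \<mu> \<theta>t (Phi y) = y" if "0 < y" "y < Tth" for y
      using Phi_props(2)[of y] that by simp
    show "isCont Phi t" using continuous_on_interior[OF Phi_cont] assms by simp
  qed
  thus ?thesis using ff_eq[OF Phi_props(1)[OF t]] Sg_ge(3)[OF Phi_props(1)[OF t]] by simp
qed

lemma cl_range: "cl t \<in> {0..Tth}" unfolding cl_def using Tth_nonneg by auto

lemma cl_early: "t \<le> T1 \<Longrightarrow> cl t = 0" unfolding cl_def using Tth_nonneg by simp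

lemma cl_mid: "T1 \<le> t \<Longrightarrow> t \<le> T1 + Tth \<Longrightarrow> cl t = t - T1" unfolding cl_def by simp

lemma PhiC_range: "Phi (cl t) \<in> {\<theta>t..\<theta>}" using Phi_props(1)[OF cl_range] .

lemma V_eq: "V t = (- (Sg \<mu> (Phi (cl t)) * sin (Phi (cl t))), Sg \<mu> (Phi (cl t)) * cos (Phi (cl t)))"
  unfolding V_def psi_def rel_vel_def using heading[OF PhiC_range] by simp

lemma psi_cont: "continuous_on UNIV psi"
proof -
  have "continuous_on UNIV cl" unfolding cl_def by (intro continuous_intros)
  hence "continuous_on UNIV (\<lambda>t. Phi (cl t))"
    by (rule continuous_on_compose2[OF Phi_cont]) (use cl_range in auto)
  hence "continuous_on UNIV (\<lambda>t. Psi (Phi (cl t)))"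
    by (rule continuous_on_compose2[OF Psi_cont]) (use PhiC_range in auto)
  thus ?thesis unfolding psi_def[abs_def] .
qed

lemma V_cont: "continuous_on UNIV V"
  unfolding V_def[abs_def] rel_vel_def using psi_cont by (intro continuous_intros)

lemma V_int: "V integrable_on {a..b}"
  by (rule integrable_continuous_interval) (rule continuous_on_subset[OF V_cont], simp)

lemma psi_meas: "psi \<in> borel_measurable lborel"
proof -
  have "psi \<in> borel_measurable borel" by (rule borel_measurable_continuous_onI[OF psi_cont])
  moreover have "borel_measurable lborel = (borel_measurable borel :: (real \<Rightarrow> real) set)"
    by (rule measurable_cong_sets) simp_all
  ultimately show ?thesis by simp
qed

lemma SgP: "Sg \<mu> \<theta>t > 0" using Sg_ge(3)[of \<theta>t] th by simp

lemma T1_pos: "T1 > 0" unfolding T1_def using rho SgP by simp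

lemma T1_Sg: "T1 * Sg \<mu> \<theta>t = \<rho>" unfolding T1_def using SgP by simp

lemma xx_early: assumes "0 \<le> t" "t \<le> T1"
  shows "xx t = (x0 - t * (Sg \<mu> \<theta>t * sin \<theta>t), y0 + t * (Sg \<mu> \<theta>t * cos \<theta>t))"
proof -
  have "integral {0..t} V = integral {0..t} (\<lambda>s. (- (Sg \<mu> \<theta>t * sin \<theta>t), Sg \<mu> \<theta>t * cos \<theta>t))"
    by (rule integral_cong) (use assms in \<open>simp add: V_eq cl_early Phi_0\<close>)
  also have "\<dots> = t *\<^sub>R (- (Sg \<mu> \<theta>t * sin \<theta>t), Sg \<mu> \<theta>t * cos \<theta>t)" using assms by simp
  finally show ?thesis unfolding xx_def by simp
qed

lemma xx_T1: "xx T1 = (cos \<theta>t, sin \<theta>t)"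
proof -
  have e1: "T1 * (Sg \<mu> \<theta>t * sin \<theta>t) = \<rho> * sin \<theta>t" using T1_Sg by (simp add: mult.assoc[symmetric])
  have e2: "T1 * (Sg \<mu> \<theta>t * cos \<theta>t) = \<rho> * cos \<theta>t" using T1_Sg by (simp add: mult.assoc[symmetric])
  have "xx T1 = (x0 - \<rho> * sin \<theta>t, y0 + \<rho> * cos \<theta>t)" using xx_early[of T1] T1_pos e1 e2 by simp
  also have "(x0 - \<rho> * sin \<theta>t, y0 + \<rho> * cos \<theta>t) = (cos \<theta>t, sin \<theta>t)" by (simp add: x0 y0)
  finally show ?thesis .
qed

definition gam where "gam s = (cos (Phi (s - T1)), sin (Phi (s - T1)))"

lemma xx_late: assumes "T1 \<le> t" "t \<le> T1 + Tth" shows "xx t = gam t"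
proof -
  have cg: "continuous_on {T1..t} gam"
  proof -
    have "continuous_on {T1..t} (\<lambda>s. Phi (s - T1))"
      by (rule continuous_on_compose2[OF Phi_cont]) (use assms in \<open>auto intro!: continuous_intros\<close>)
    thus ?thesis unfolding gam_def[abs_def] by (intro continuous_intros)
  qed
  have dg: "(gam has_vector_derivative V s) (at s)" if s: "s \<in> {T1<..<t}" for s
  proof -
    have s1: "0 < s - T1" "s - T1 < Tth" using s assms by auto
    have dP: "((\<lambda>s. Phi (s - T1)) has_real_derivative Sg \<mu> (Phi (s - T1)) * 1) (at s)"
      by (rule DERIV_chain2[where g="\<lambda>s. s - T1" and x=s, OF Phi_deriv[OF s1]]) (auto intro!: derivative_eq_intros)
    have dc: "((\<lambda>s. cos (Phi (s - T1))) has_real_derivative - sin (Phi (s - T1)) * (Sg \<mu> (Phi (s - T1)) * 1)) (at s)"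
      by (rule DERIV_chain2[OF DERIV_cos dP])
    have ds: "((\<lambda>s. sin (Phi (s - T1))) has_real_derivative cos (Phi (s - T1)) * (Sg \<mu> (Phi (s - T1)) * 1)) (at s)"
      by (rule DERIV_chain2[OF DERIV_sin dP])
    have "(gam has_vector_derivative (- sin (Phi (s - T1)) * (Sg \<mu> (Phi (s - T1)) * 1),
            cos (Phi (s - T1)) * (Sg \<mu> (Phi (s - T1)) * 1))) (at s)"
      unfolding gam_def[abs_def]
      by (rule has_vector_derivative_Pair) (use dc ds in \<open>simp_all add: has_real_derivative_iff_has_vector_derivative\<close>)
    moreover have "cl s = s - T1" using s assms by (intro cl_mid) auto
    ultimately show ?thesis by (simp add: V_eq mult.commute)
  qed
  have "(V has_integral gam t - gam T1) {T1..t}"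
    by (rule fundamental_theorem_of_calculus_interior[OF assms(1) cg dg])
  hence i2: "integral {T1..t} V = gam t - gam T1" by (rule integral_unique)
  have "integral {0..T1} V + integral {T1..t} V = integral {0..t} V"
    by (rule Henstock_Kurzweil_Integration.integral_combine) (use assms T1_pos V_int in auto)
  hence "xx t = xx T1 + integral {T1..t} V" unfolding xx_def by (simp add: algebra_simps)
  also have "\<dots> = gam t" unfolding i2 xx_T1 gam_def using Phi_0 by simp
  finally show ?thesis .
qed

lemma seg: assumes "0 \<le> t" "t \<le> T1"
  shows "xx t \<in> closed_segment (x0, y0) (cos \<theta>t, sin \<theta>t)" "1 \<le> norm (xx t)"
proof -
  define u where "u = t / T1"
  have u: "0 \<le> u" "u \<le> 1" unfolding u_def using assms T1_pos by auto
  have tu: "t * Sg \<mu> \<theta>t = u * \<rho>" unfolding u_def using T1_Sg T1_pos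
    by (metis T1_Sg divide_eq_eq less_irrefl mult.assoc mult.commute nonzero_mult_div_cancel_left)
  have xe: "xx t = (x0 - u * \<rho> * sin \<theta>t, y0 + u * \<rho> * cos \<theta>t)"
    using xx_early[OF assms] tu by (simp add: mult.assoc[symmetric])
  have "(x0 - u * \<rho> * sin \<theta>t, y0 + u * \<rho> * cos \<theta>t) = (1 - u) *\<^sub>R (x0, y0) + u *\<^sub>R (cos \<theta>t, sin \<theta>t)"
    by (simp add: x0 y0 algebra_simps)
  hence "xx t = (1 - u) *\<^sub>R (x0, y0) + u *\<^sub>R (cos \<theta>t, sin \<theta>t)" using xe by simp
  thus "xx t \<in> closed_segment (x0, y0) (cos \<theta>t, sin \<theta>t)" unfolding closed_segment_def using u by blast
  define w where "w = (1 - u) * \<rho>"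
  have "(x0 - u * \<rho> * sin \<theta>t, y0 + u * \<rho> * cos \<theta>t) = (cos \<theta>t + w * sin \<theta>t, sin \<theta>t - w * cos \<theta>t)"
    by (simp add: x0 y0 w_def algebra_simps)
  hence xw: "xx t = (cos \<theta>t + w * sin \<theta>t, sin \<theta>t - w * cos \<theta>t)" using xe by simp
  have "(cos \<theta>t + w * sin \<theta>t)\<^sup>2 + (sin \<theta>t - w * cos \<theta>t)\<^sup>2 = ((cos \<theta>t)\<^sup>2 + (sin \<theta>t)\<^sup>2) * (1 + w\<^sup>2)"
    by algebra
  also have "\<dots> = 1 + w\<^sup>2" by simp
  finally have "norm (xx t) = sqrt (1 + w\<^sup>2)" unfolding xw by (simp add: norm_prod_def)
  thus "1 \<le> norm (xx t)" by simp
qed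

lemma construct:
  "\<exists>\<psi> T x T1.
     admissible \<mu> (x0, y0) \<psi> T x \<and> x T = (cos \<theta>, sin \<theta>) \<and> T1 \<in> {0..T} \<and>
     x T1 = (cos \<theta>t, sin \<theta>t) \<and>
     (\<forall>t\<in>{0..T1}. x t \<in> closed_segment (x0, y0) (cos \<theta>t, sin \<theta>t)) \<and>
     (\<exists>\<phi>. mono_on {T1..T} \<phi> \<and> \<phi> T1 = \<theta>t \<and> \<phi> T = \<theta> \<and>
        (\<forall>t\<in>{T1..T}. x t = (cos (\<phi> t), sin (\<phi> t)))) \<and>
     T = \<rho> / Sg \<mu> \<theta>t + integral {\<theta>t..\<theta>} (\<lambda>\<phi>. 1 / Sg \<mu> \<phi>)"
proof (rule exI[of _ psi], rule exI[of _ "T1 + Tth"], rule exI[of _ xx], rule exI[of _ T1], intro conjI)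
  show "admissible \<mu> (x0, y0) psi (T1 + Tth) xx"
    unfolding admissible_def
  proof (intro conjI ballI)
    show "0 \<le> T1 + Tth" using T1_pos Tth_nonneg by simp
    show "psi \<in> borel_measurable lborel" by (rule psi_meas)
    fix t assume t: "t \<in> {0..T1 + Tth}"
    show "xx t = (x0, y0) + integral {0..t} (\<lambda>s. rel_vel \<mu> (psi s))"
      unfolding xx_def V_def ..
    show "1 \<le> norm (xx t)"
    proof (cases "t \<le> T1")
      case True thus ?thesis using seg(2)[of t] t by auto
    next
      case False thus ?thesis using xx_late[of t] t by (simp add: gam_def norm_prod_def)
    qed
  qed
  show "xx (T1 + Tth) = (cos \<theta>, sin \<theta>)"
    using xx_late[of "T1 + Tth"] Tth_nonneg by (simp add: gam_def Phi_T)
  show "T1 \<in> {0..T1 + Tth}" using T1_pos Tth_nonneg by simp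
  show "xx T1 = (cos \<theta>t, sin \<theta>t)" by (rule xx_T1)
  show "\<forall>t\<in>{0..T1}. xx t \<in> closed_segment (x0, y0) (cos \<theta>t, sin \<theta>t)" using seg(1) by auto
  show "\<exists>\<phi>. mono_on {T1..T1 + Tth} \<phi> \<and> \<phi> T1 = \<theta>t \<and> \<phi> (T1 + Tth) = \<theta> \<and>
        (\<forall>t\<in>{T1..T1 + Tth}. xx t = (cos (\<phi> t), sin (\<phi> t)))"
  proof (intro exI[of _ "\<lambda>t. Phi (t - T1)"] conjI ballI)
    show "mono_on {T1..T1 + Tth} (\<lambda>t. Phi (t - T1))"
      by (rule mono_onI, rule Phi_mono) auto
    show "Phi (T1 - T1) = \<theta>t" using Phi_0 by simp
    show "Phi (T1 + Tth - T1) = \<theta>" using Phi_T by simp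
    fix t assume "t \<in> {T1..T1 + Tth}"
    thus "xx t = (cos (Phi (t - T1)), sin (Phi (t - T1)))" using xx_late[of t] by (simp add: gam_def)
  qed
  show "T1 + Tth = \<rho> / Sg \<mu> \<theta>t + integral {\<theta>t..\<theta>} (\<lambda>\<phi>. 1 / Sg \<mu> \<phi>)"
  proof -
    have "Tth = integral {\<theta>t..\<theta>} (ff c0 \<mu>)" unfolding Tth_def using th by (intro tau_eq c0_pos) auto
    also have "\<dots> = integral {\<theta>t..\<theta>} (\<lambda>\<phi>. 1 / Sg \<mu> \<phi>)" by (rule integral_cong) (simp add: ff_eq)
    finally show ?thesis unfolding T1_def by simp
  qed
qed

end

lemma geom_tan:
  fixes x0 y0 :: real
  assumes r1: "norm (x0, y0) > 1" and y0: "y0 \<ge> 0"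
  defines "r \<equiv> norm (x0, y0)"
  defines "th \<equiv> arccos (1 / r) + atan2 y0 x0"
  defines "\<rho> \<equiv> sqrt (r\<^sup>2 - 1)"
  shows "x0 = cos th + \<rho> * sin th" "y0 = sin th - \<rho> * cos th" "0 < th" "\<rho> > 0"
proof -
  define a where "a = atan2 y0 x0"
  define z where "z = Complex x0 y0"
  have cz: "cmod z = r" unfolding z_def r_def by (simp add: cmod_def norm_prod_def)
  have "rcis (cmod z) (Arg z) = z" by (rule rcis_cmod_Arg)
  hence xa: "x0 = r * cos a" and ya: "y0 = r * sin a"
    unfolding a_def atan2_def z_def[symmetric] using cz
    by (auto simp: rcis_def cis_def complex_eq_iff z_def)
  have rpos: "r > 1" using r1 r_def by simp
  have "a \<ge> 0"
  proof (rule ccontr)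
    assume "\<not> a \<ge> 0"
    moreover have "-pi < a" unfolding a_def atan2_def using Arg_bounded by auto
    ultimately have "sin a < 0" using sin_gt_zero[of "-a"] by auto
    moreover have "r * sin a < 0" using rpos \<open>sin a < 0\<close> by (simp add: mult_pos_neg)
    ultimately show False using ya y0 by simp
  qed
  have ir: "0 < 1/r" "1/r < 1" using rpos by auto
  define b where "b = arccos (1/r)"
  have cb: "cos b = 1/r" unfolding b_def using ir by (intro cos_arccos) linarith+
  have "sin b = sqrt (1 - (1/r)\<^sup>2)" unfolding b_def using ir by (intro sin_arccos) linarith+
  also have "1 - (1/r)\<^sup>2 = (r\<^sup>2 - 1) / r\<^sup>2" using rpos by (simp add: field_simps power2_eq_square)
  also have "sqrt ((r\<^sup>2 - 1) / r\<^sup>2) = \<rho> / r" unfolding \<rho>_def using rpos by (simp add: real_sqrt_divide)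
  finally have sb: "sin b = \<rho> / r" .
  have b0: "b > 0" unfolding b_def using arccos_lt_bounded[of "1/r"] ir by simp
  have rc: "r * cos b = 1" using cb rpos by simp
  have rs: "r * sin b = \<rho>" using sb rpos by simp
  have th: "th = b + a" unfolding th_def a_def b_def by simp
  have "x0 = r * cos (th - b)" using xa th by simp
  also have "\<dots> = cos th * (r * cos b) + sin th * (r * sin b)" by (simp add: cos_diff algebra_simps)
  also have "\<dots> = cos th + \<rho> * sin th" using rc rs by simp
  finally show "x0 = cos th + \<rho> * sin th" .
  have "y0 = r * sin (th - b)" using ya th by simp
  also have "\<dots> = sin th * (r * cos b) - cos th * (r * sin b)" by (simp add: sin_diff algebra_simps)
  also have "\<dots> = sin th - \<rho> * cos th" using rc rs by simp
  finally show "y0 = sin th - \<rho> * cos th" .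
  show "0 < th" using th b0 \<open>a \<ge> 0\<close> by simp
  show "\<rho> > 0" unfolding \<rho>_def using rpos by simp
qed


theorem theorem1:
  fixes \<mu> x0 y0 \<theta> :: real
  assumes "0 < \<mu>" "\<mu> < 1"
    and "norm (x0, y0) > 1" "y0 \<ge> 0"
    and "\<theta> \<ge> arccos (1 / norm (x0, y0)) + atan2 y0 x0" "\<theta> \<le> pi"
    and "\<exists>\<psi> T x. admissible \<mu> (x0, y0) \<psi> T x \<and> x T = (cos \<theta>, sin \<theta>)"
  shows "\<exists>\<psi> T x T1.
           admissible \<mu> (x0, y0) \<psi> T x \<and> x T = (cos \<theta>, sin \<theta>) \<and>
           T1 \<in> {0..T} \<and>
           (let \<theta>tan = arccos (1 / norm (x0, y0)) + atan2 y0 x0 in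
              x T1 = (cos \<theta>tan, sin \<theta>tan) \<and>
              (\<forall>t\<in>{0..T1}. x t \<in> closed_segment (x0, y0) (cos \<theta>tan, sin \<theta>tan)) \<and>
              (\<exists>\<phi>. mono_on {T1..T} \<phi> \<and> \<phi> T1 = \<theta>tan \<and> \<phi> T = \<theta> \<and>
                    (\<forall>t\<in>{T1..T}. x t = (cos (\<phi> t), sin (\<phi> t))))) \<and>
           (\<forall>\<psi>' T' x'. admissible \<mu> (x0, y0) \<psi>' T' x' \<and> x' T' = (cos \<theta>, sin \<theta>)
               \<longrightarrow> T \<le> T')"
proof -
  define r where "r = norm (x0, y0)"
  define th where "th = arccos (1 / r) + atan2 y0 x0"
  define \<rho> where "\<rho> = sqrt (r\<^sup>2 - 1)"
  have g: "x0 = cos th + \<rho> * sin th" "y0 = sin th - \<rho> * cos th" "0 < th" "\<rho> > 0"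
    using geom_tan[OF assms(3,4)] unfolding r_def th_def \<rho>_def by auto
  have th_eq: "arccos (1 / norm (x0, y0)) + atan2 y0 x0 = th" by (simp add: th_def r_def)
  have thle: "th \<le> \<theta>" using assms(5) th_eq by simp
  have trj: "traj \<mu> x0 y0 th \<theta> \<rho> \<psi>' T' x'"
    if "admissible \<mu> (x0, y0) \<psi>' T' x'" "x' T' = (cos \<theta>, sin \<theta>)" for \<psi>' T' x'
    unfolding traj_def using assms(1,2,6) g thle that by auto
  obtain \<psi>0 T0 xa where a0: "admissible \<mu> (x0, y0) \<psi>0 T0 xa" "xa T0 = (cos \<theta>, sin \<theta>)"
    using assms(7) by blast
  note tr0 = trj[OF a0]
  have co: "cons \<mu> x0 y0 th \<theta> \<rho>"
    unfolding cons_def using assms(1,2) g thle traj.th_lt_pi[OF tr0] traj.cos_th[OF tr0]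
      traj.cos_tht_le[OF tr0] by auto
  obtain \<psi> T x T1 where C:
     "admissible \<mu> (x0, y0) \<psi> T x" "x T = (cos \<theta>, sin \<theta>)" "T1 \<in> {0..T}"
     "x T1 = (cos th, sin th)"
     "\<forall>t\<in>{0..T1}. x t \<in> closed_segment (x0, y0) (cos th, sin th)"
     "\<exists>\<phi>. mono_on {T1..T} \<phi> \<and> \<phi> T1 = th \<and> \<phi> T = \<theta> \<and>
        (\<forall>t\<in>{T1..T}. x t = (cos (\<phi> t), sin (\<phi> t)))"
     "T = \<rho> / Sg \<mu> th + integral {th..\<theta>} (\<lambda>\<phi>. 1 / Sg \<mu> \<phi>)"
    using cons.construct[OF co] by blast
  have mn: "\<forall>\<psi>' T' x'. admissible \<mu> (x0, y0) \<psi>' T' x' \<and> x' T' = (cos \<theta>, sin \<theta>) \<longrightarrow> T \<le> T'"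
  proof (intro allI impI)
    fix \<psi>' T' x' assume h: "admissible \<mu> (x0, y0) \<psi>' T' x' \<and> x' T' = (cos \<theta>, sin \<theta>)"
    show "T \<le> T'" using traj.lower[OF trj[OF conjunct1[OF h] conjunct2[OF h]]] C(7) by simp
  qed
  show ?thesis unfolding Let_def th_eq using C(1-6) mn by blast
qed

end
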